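(* Let $\mathcal H$ be a complex Hilbert space, $T\in\mathcal B(\mathcal H)$ with polar decomposition $T=U|T|$. Then for all $t\in[0,1]$ and all $x,y\in\mathcal H$ with $Tx\neq0$, $$|\langle Tx,y\rangle|\le\frac{\|T\|^{1/2}}{2}\left(2\sqrt{\langle|T|^tx,x\rangle\langle|T^*|^{1-t}y,y\rangle}-\frac{\inf_{\lambda\in\mathbb C}\big\||T|^{t/2}x-\lambda|T|^{(1-t)/2}U^*y\big\|^2}{2\||T|^{t/2}x\|}\,\big\||T^*|^{(1-t)/2}y\big\|\right).$$
   Context: $|T|=(T^*T)^{1/2}$, $|T^*|=(TT^* )^{1/2}$, powers via functional calculus with $|T|^0=I$; $T=U|T|$ is the polar decomposition with $U$ a partial isometry; $\|\cdot\|$ is the operator norm. *)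

theory Defs
  imports "HOL-Analysis.Analysis" "HOL-Computational_Algebra.Polynomial"
begin

class complex_vector = real_vector +
  fixes scaleC :: "complex \<Rightarrow> 'a \<Rightarrow> 'a"
  assumes scaleC_add_right: "scaleC a (x + y) = scaleC a x + scaleC a y"
    and scaleC_add_left: "scaleC (a + b) x = scaleC a x + scaleC b x"
    and scaleC_scaleC: "scaleC a (scaleC b x) = scaleC (a * b) x"
    and scaleC_one: "scaleC 1 x = x"
    and scaleR_scaleC: "scaleR r x = scaleC (complex_of_real r) x"

class complex_inner = complex_vector + real_normed_vector +
  fixes cinner :: "'a \<Rightarrow> 'a \<Rightarrow> complex"
  assumes cinner_commute: "cinner x y = cnj (cinner y x)"
    and cinner_add_left: "cinner (x + y) z = cinner x z + cinner y z"
    and cinner_scaleC_left: "cinner (scaleC a x) y = a * cinner x y"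
    and cinner_real_nonneg: "Im (cinner x x) = 0 \<and> 0 \<le> Re (cinner x x)"
    and cinner_eq_zero_iff: "cinner x x = 0 \<longleftrightarrow> x = 0"
    and norm_eq_sqrt_cinner: "norm x = sqrt (Re (cinner x x))"

class chilbert_space = complex_inner + banach

definition bounded_clinear :: "('a::complex_inner \<Rightarrow> 'b::complex_inner) \<Rightarrow> bool" where
  "bounded_clinear T \<longleftrightarrow>
     (\<forall>x y. T (x + y) = T x + T y) \<and> (\<forall>a x. T (scaleC a x) = scaleC a (T x)) \<and>
     (\<exists>K. \<forall>x. norm (T x) \<le> norm x * K)"

definition adj :: "('a::complex_inner \<Rightarrow> 'b::complex_inner) \<Rightarrow> 'b \<Rightarrow> 'a" where
  "adj T = (SOME S. \<forall>x y. cinner (T x) y = cinner x (S y))"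

text \<open>Function f_t(s) = s^t with the convention s^0 = 1 (so that A^0 = I).\<close>
definition fc_fun :: "real \<Rightarrow> real \<Rightarrow> real" where
  "fc_fun t s = (if t = 0 then 1 else s powr t)"

definition poly_op :: "real poly \<Rightarrow> ('a::complex_inner \<Rightarrow> 'a) \<Rightarrow> 'a \<Rightarrow> 'a" where
  "poly_op p A x = (\<Sum>i\<le>degree p. coeff p i *\<^sub>R (A ^^ i) x)"

text \<open>For a positive operator A (spectrum in [0, norm A]), A^t is the strong limit of
  p_n(A) for any sequence of real polynomials p_n converging uniformly to s^t on [0, norm A].\<close>
definition opow :: "('a::complex_inner \<Rightarrow> 'a) \<Rightarrow> real \<Rightarrow> 'a \<Rightarrow> 'a" where
  "opow A t = (THE B. \<forall>P. uniform_limit {0..onorm A} (\<lambda>n. poly (P n)) (fc_fun t) sequentially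
                  \<longrightarrow> (\<forall>x. (\<lambda>n. poly_op (P n) A x) \<longlonglongrightarrow> B x))"

definition absop :: "('a::complex_inner \<Rightarrow> 'a) \<Rightarrow> 'a \<Rightarrow> 'a" where
  "absop T = opow (adj T \<circ> T) (1/2)"

definition partial_isometry :: "('a::complex_inner \<Rightarrow> 'a) \<Rightarrow> bool" where
  "partial_isometry U \<longleftrightarrow> bounded_clinear U \<and>
     (\<forall>x. (\<forall>z. U z = 0 \<longrightarrow> cinner z x = 0) \<longrightarrow> norm (U x) = norm x)"

definition polar_decomposition :: "('a::complex_inner \<Rightarrow> 'a) \<Rightarrow> ('a \<Rightarrow> 'a) \<Rightarrow> bool" where
  "polar_decomposition T U \<longleftrightarrow> partial_isometry U \<and> (\<forall>z. T z = U (absop T z)) \<and>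
     (\<forall>z. U z = 0 \<longleftrightarrow> T z = 0)"

end

theory Submission
  imports Defs
begin


lemma scaleC_zero_right [simp]: "scaleC a (0::'a::complex_vector) = 0"
  by (metis add_cancel_right_right scaleC_add_right)
lemma scaleC_minus_right: "scaleC a (- x::'a::complex_vector) = - scaleC a x"
  by (metis add.right_inverse eq_neg_iff_add_eq_0 scaleC_add_right scaleC_zero_right)
lemma scaleC_diff_right: "scaleC a (x - y::'a::complex_vector) = scaleC a x - scaleC a y"
  by (metis diff_conv_add_uminus scaleC_add_right scaleC_minus_right)
lemma scaleC_zero_left [simp]: "scaleC 0 (x::'a::complex_vector) = 0"
  by (metis scaleR_scaleC scaleR_zero_left of_real_0)
lemma scaleC_minus_left: "scaleC (- a) (x::'a::complex_vector) = - scaleC a x"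
  by (metis add.right_inverse eq_neg_iff_add_eq_0 scaleC_add_left scaleC_zero_left)
lemma scaleC_diff_left: "scaleC (a - b) (x::'a::complex_vector) = scaleC a x - scaleC b x"
  by (metis diff_conv_add_uminus scaleC_add_left scaleC_minus_left)
lemma scaleC_of_real: "scaleC (of_real r) (x::'a::complex_vector) = scaleR r x"
  by (simp add: scaleR_scaleC)
lemma scaleC_scaleR_comm: "scaleC a (scaleR r (x::'a::complex_vector)) = scaleR r (scaleC a x)"
  by (simp add: scaleR_scaleC scaleC_scaleC mult.commute)

lemma cinner_zero_left [simp]: "cinner 0 (y::'a::complex_inner) = 0"
  by (metis add_cancel_right_right add_0 cinner_add_left)
lemma cinner_minus_left: "cinner (- x) (y::'a::complex_inner) = - cinner x y"
  by (metis add.right_inverse cinner_add_left cinner_zero_left eq_neg_iff_add_eq_0)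
lemma cinner_diff_left: "cinner (x - z) (y::'a::complex_inner) = cinner x y - cinner z y"
  by (metis cinner_add_left cinner_minus_left diff_conv_add_uminus)
lemma cinner_add_right: "cinner x (y + z::'a::complex_inner) = cinner x y + cinner x z"
  by (metis cinner_add_left cinner_commute complex_cnj_add)
lemma cinner_zero_right [simp]: "cinner x (0::'a::complex_inner) = 0"
  by (metis cinner_commute cinner_zero_left complex_cnj_zero)
lemma cinner_minus_right: "cinner x (- y::'a::complex_inner) = - cinner x y"
  by (metis cinner_commute cinner_minus_left complex_cnj_minus)
lemma cinner_diff_right: "cinner x (y - z::'a::complex_inner) = cinner x y - cinner x z"
  by (metis cinner_add_right cinner_minus_right diff_conv_add_uminus)
lemma cinner_scaleC_right: "cinner x (scaleC a y::'a::complex_inner) = cnj a * cinner x y"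
  by (metis cinner_commute cinner_scaleC_left complex_cnj_cnj complex_cnj_mult)
lemma cinner_scaleR_left: "cinner (scaleR r x) (y::'a::complex_inner) = of_real r * cinner x y"
  by (simp add: scaleR_scaleC cinner_scaleC_left)
lemma cinner_scaleR_right: "cinner x (scaleR r y::'a::complex_inner) = of_real r * cinner x y"
  by (simp add: scaleR_scaleC cinner_scaleC_right)
lemma cinner_sum_left: "cinner (\<Sum>i\<in>I. f i) (y::'a::complex_inner) = (\<Sum>i\<in>I. cinner (f i) y)"
  by (induct I rule: infinite_finite_induct) (auto simp: cinner_add_left)

lemma cinner_self: "cinner x (x::'a::complex_inner) = of_real ((norm x)\<^sup>2)"
proof -
  have "Im (cinner x x) = 0" "0 \<le> Re (cinner x x)" using cinner_real_nonneg by auto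
  moreover have "(norm x)\<^sup>2 = Re (cinner x x)" using norm_eq_sqrt_cinner[of x] \<open>0 \<le> Re _\<close> by simp
  ultimately show ?thesis by (simp add: complex_eq_iff)
qed

lemma Re_cinner_self: "Re (cinner x (x::'a::complex_inner)) = (norm x)\<^sup>2"
  by (simp add: cinner_self)

lemma norm_scaleC: "norm (scaleC a (x::'a::complex_inner)) = cmod a * norm x"
proof -
  have "(norm (scaleC a x))\<^sup>2 = Re (cinner (scaleC a x) (scaleC a x))" by (simp add: Re_cinner_self)
  also have "\<dots> = Re ((a * cnj a) * cinner x x)" by (simp only: cinner_scaleC_left cinner_scaleC_right mult.assoc mult.left_commute)
  also have "\<dots> = Re (of_real ((cmod a)\<^sup>2 * (norm x)\<^sup>2))"
    unfolding complex_norm_square[symmetric] cinner_self by (simp only: of_real_mult)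
  also have "\<dots> = (cmod a)\<^sup>2 * (norm x)\<^sup>2" by (simp only: Re_complex_of_real)
  finally have "(norm (scaleC a x))\<^sup>2 = (cmod a * norm x)\<^sup>2" by (simp add: power_mult_distrib)
  then show ?thesis by (simp add: power2_eq_iff_nonneg)
qed

lemma norm_add_scaleC_sq:
  "(norm (x + scaleC l (k::'a::complex_inner)))\<^sup>2 = (norm x)\<^sup>2 + 2 * Re (cnj l * cinner x k) + (cmod l)\<^sup>2 * (norm k)\<^sup>2"
proof -
  have "(norm (x + scaleC l k))\<^sup>2 = Re (cinner (x + scaleC l k) (x + scaleC l k))" by (simp add: Re_cinner_self)
  also have "\<dots> = Re (cinner x x) + Re (cnj l * cinner x k) + Re (l * cinner k x) + Re ((l * cnj l) * cinner k k)"
    by (simp add: cinner_add_left cinner_add_right cinner_scaleC_left cinner_scaleC_right algebra_simps)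
  also have "Re (l * cinner k x) = Re (cnj l * cinner x k)"
    by (metis cinner_commute complex_cnj_cnj complex_cnj_mult cnj.sel(1))
  also have "Re ((l * cnj l) * cinner k k) = (cmod l)\<^sup>2 * (norm k)\<^sup>2"
    unfolding complex_norm_square[symmetric] cinner_self by (simp only: of_real_mult[symmetric] Re_complex_of_real)
  finally show ?thesis by (simp add: Re_cinner_self)
qed

lemma cauchy_schwarz: "cmod (cinner x (y::'a::complex_inner)) \<le> norm x * norm y"
proof (cases "y = 0")
  case True then show ?thesis by simp
next
  case False
  then have ny: "norm y > 0" by simp
  define l where "l = - cinner x y / of_real ((norm y)\<^sup>2)"
  have "0 \<le> (norm (x + scaleC l y))\<^sup>2" by simp
  also have "\<dots> = (norm x)\<^sup>2 - (cmod (cinner x y))\<^sup>2 / (norm y)\<^sup>2"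
  proof -
    have "cnj l * cinner x y = - of_real ((cmod (cinner x y))\<^sup>2 / (norm y)\<^sup>2)"
    proof -
      have "cnj l * cinner x y = - (cinner x y * cnj (cinner x y)) / of_real ((norm y)\<^sup>2)"
        by (simp add: l_def)
      also have "\<dots> = - of_real ((cmod (cinner x y))\<^sup>2) / of_real ((norm y)\<^sup>2)"
        unfolding complex_norm_square[symmetric] by simp
      finally show ?thesis by simp
    qed
    moreover have "cmod l = cmod (cinner x y) / (norm y)\<^sup>2"
      by (simp add: l_def norm_divide norm_power)
    ultimately show ?thesis using ny
      by (simp add: norm_add_scaleC_sq power_divide) (simp add: field_simps power2_eq_square power4_eq_xxxx)
  qed
  finally have "(cmod (cinner x y))\<^sup>2 \<le> (norm x * norm y)\<^sup>2" using ny
    by (simp add: field_simps power_mult_distrib)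
  then show ?thesis by (rule power2_le_imp_le) auto
qed

lemma bounded_bilinear_cinner: "bounded_bilinear (cinner :: 'a::complex_inner \<Rightarrow> 'a \<Rightarrow> complex)"
proof
  show "\<exists>K. \<forall>a b::'a. norm (cinner a b) \<le> norm a * norm b * K"
    by (rule exI[of _ 1]) (simp add: cauchy_schwarz)
qed (auto simp: cinner_add_left cinner_add_right cinner_scaleR_left cinner_scaleR_right scaleR_conv_of_real)

lemmas tendsto_cinner = bounded_bilinear.tendsto[OF bounded_bilinear_cinner]

lemma bounded_linear_scaleC: "bounded_linear (scaleC a :: 'a::complex_inner \<Rightarrow> 'a)"
  by (rule bounded_linear_intro[of _ "cmod a"]) (auto simp: scaleC_add_right scaleC_scaleR_comm norm_scaleC mult.commute)

lemma cinner_eq_zero_all: "(\<And>x. cinner x z = 0) \<Longrightarrow> z = (0::'a::complex_inner)"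
  using cinner_eq_zero_iff by blast

lemma cinner_ext: "(\<And>x. cinner x z = cinner x w) \<Longrightarrow> z = (w::'a::complex_inner)"
  by (metis cinner_diff_right cinner_eq_zero_iff diff_self eq_iff_diff_eq_0)



lemma norm_sq_proj:
  assumes "k \<noteq> (0::'a::complex_inner)"
  shows "(norm (x + scaleC (- cinner x k / of_real ((norm k)\<^sup>2)) k))\<^sup>2 = (norm x)\<^sup>2 - (cmod (cinner x k))\<^sup>2 / (norm k)\<^sup>2"
proof -
  define l where "l = - cinner x k / of_real ((norm k)\<^sup>2)"
  have ny: "norm k > 0" using assms by simp
  have "cnj l * cinner x k = - of_real ((cmod (cinner x k))\<^sup>2 / (norm k)\<^sup>2)"
  proof -
    have "cnj l * cinner x k = - (cinner x k * cnj (cinner x k)) / of_real ((norm k)\<^sup>2)"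
      by (simp add: l_def)
    also have "\<dots> = - of_real ((cmod (cinner x k))\<^sup>2) / of_real ((norm k)\<^sup>2)"
      unfolding complex_norm_square[symmetric] by simp
    finally show ?thesis by simp
  qed
  moreover have "cmod l = cmod (cinner x k) / (norm k)\<^sup>2"
    by (simp add: l_def norm_divide norm_power)
  ultimately show ?thesis using ny unfolding l_def[symmetric]
    by (simp add: norm_add_scaleC_sq power_divide) (simp add: field_simps power2_eq_square power4_eq_xxxx)
qed

lemma parallelogram:
  "(norm (u + v))\<^sup>2 + (norm (u - v))\<^sup>2 = 2 * (norm u)\<^sup>2 + 2 * (norm (v::'a::complex_inner))\<^sup>2"
proof -
  have "(norm (u + v))\<^sup>2 + (norm (u - v))\<^sup>2 = Re (cinner (u+v) (u+v)) + Re (cinner (u-v) (u-v))"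
    by (simp add: Re_cinner_self)
  also have "\<dots> = 2 * Re (cinner u u) + 2 * Re (cinner v v)"
    by (simp add: cinner_add_left cinner_add_right cinner_diff_left cinner_diff_right)
  finally show ?thesis by (simp add: Re_cinner_self)
qed

lemma riesz:
  fixes f :: "'a::chilbert_space \<Rightarrow> complex"
  assumes add: "\<And>x y. f (x + y) = f x + f y" and sc: "\<And>a x. f (scaleC a x) = a * f x"
    and bnd: "\<And>x. cmod (f x) \<le> norm x * K"
  shows "\<exists>z. \<forall>x. f x = cinner x z"
proof (cases "\<forall>x. f x = 0")
  case True then show ?thesis by (intro exI[of _ 0]) simp
next
  case False
  then obtain x1 where x1: "f x1 \<noteq> 0" by auto
  have bl: "bounded_linear f"
    by (rule bounded_linear_intro[of _ K]) (auto simp: add sc scaleR_scaleC bnd scaleR_conv_of_real)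
  define S where "S = {x. f x = 1}"
  have S1: "scaleC (1 / f x1) x1 \<in> S" using x1 by (simp add: S_def sc)
  define d where "d = Inf (norm ` S)"
  have bdd: "bdd_below (norm ` S)" by (rule bdd_belowI[of _ 0]) auto
  have d_le: "d \<le> norm w" if "w \<in> S" for w
    unfolding d_def using bdd that by (simp add: cInf_lower)
  have d0: "0 \<le> d" unfolding d_def using S1 by (intro cInf_greatest) auto
  have "\<exists>x. x \<in> S \<and> norm x < d + 1 / (real n + 1)" for n
  proof -
    have "Inf (norm ` S) < d + 1 / (real n + 1)" unfolding d_def by (simp add: add_pos_pos)
    moreover have "norm ` S \<noteq> {}" using S1 by blast
    ultimately obtain v where "v \<in> norm ` S" "v < d + 1 / (real n + 1)"
      using cInf_lessD[of "norm ` S"] by blast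
    then show ?thesis by auto
  qed
  then obtain xs where xsS: "\<And>n. xs n \<in> S" and xsn: "\<And>n. norm (xs n) < d + 1 / (real n + 1)"
    by metis
  have mid: "2 * d \<le> norm (xs m + xs n)" for m n
  proof -
    have "scaleR (1/2) (xs m + xs n) \<in> S" using xsS unfolding S_def
      by (simp add: add scaleR_scaleC sc)
    then have "d \<le> norm (scaleR (1/2) (xs m + xs n))" by (rule d_le)
    then show ?thesis by simp
  qed
  have est: "(norm (xs m - xs n))\<^sup>2 \<le> (4*d+2) * (1 / (real m + 1)) + (4*d+2) * (1 / (real n + 1))" for m n
  proof -
    define em where "em = 1 / (real m + 1)"
    define en where "en = 1 / (real n + 1)"
    have em: "0 < em" "em \<le> 1" unfolding em_def by (auto simp: field_simps)
    have en: "0 < en" "en \<le> 1" unfolding en_def by (auto simp: field_simps)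
    have a: "(norm (xs m))\<^sup>2 \<le> (d + em)\<^sup>2" using xsn[of m] unfolding em_def
      by (intro power_mono) auto
    have b: "(norm (xs n))\<^sup>2 \<le> (d + en)\<^sup>2" using xsn[of n] unfolding en_def
      by (intro power_mono) auto
    have c: "(2*d)\<^sup>2 \<le> (norm (xs m + xs n))\<^sup>2" using mid[of m n] d0 by (intro power_mono) auto
    have "(norm (xs m - xs n))\<^sup>2 = 2 * (norm (xs m))\<^sup>2 + 2 * (norm (xs n))\<^sup>2 - (norm (xs m + xs n))\<^sup>2"
      using parallelogram[of "xs m" "xs n"] by simp
    also have "\<dots> \<le> 2 * (d + em)\<^sup>2 + 2 * (d + en)\<^sup>2 - (2*d)\<^sup>2" using a b c by simp
    also have "\<dots> = 4*d*em + 2*em*em + 4*d*en + 2*en*en" by (simp add: power2_eq_square algebra_simps)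
    also have "\<dots> \<le> (4*d+2) * em + (4*d+2) * en"
    proof -
      have "2*em*em \<le> 2*em" "2*en*en \<le> 2*en" using em en by (auto intro: mult_right_le_one_le)
      then show ?thesis by (simp only: distrib_right)
    qed
    finally show ?thesis unfolding em_def en_def .
  qed
  have "Cauchy xs"
  proof (rule metric_CauchyI)
    fix e :: real assume e: "0 < e"
    define D where "D = 4*d+2"
    have D: "0 < D" using d0 by (simp add: D_def)
    obtain M0 :: nat where "2 * D / (e\<^sup>2) < real M0" using reals_Archimedean2 by blast
    then obtain M :: nat where M: "2 * D / (e\<^sup>2) < real M + 1" by (intro that[of M0]) simp
    have "dist (xs m) (xs n) < e" if "M \<le> m" "M \<le> n" for m n
    proof -
      have "1 / (real m + 1) \<le> 1 / (real M + 1)" "1 / (real n + 1) \<le> 1 / (real M + 1)"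
        using that by (auto simp: field_simps)
      then have "(norm (xs m - xs n))\<^sup>2 \<le> 2 * D * (1 / (real M + 1))"
        using est[of m n] D unfolding D_def[symmetric]
        using mult_left_mono[of "1 / (real m + 1)" "1 / (real M + 1)" D] mult_left_mono[of "1 / (real n + 1)" "1 / (real M + 1)" D]
        by linarith
      also have "\<dots> < e\<^sup>2" using M e D by (simp add: field_simps)
      finally have "(norm (xs m - xs n))\<^sup>2 < e\<^sup>2" .
      then show ?thesis using e by (simp add: dist_norm power_less_imp_less_base)
    qed
    then show "\<exists>M. \<forall>m\<ge>M. \<forall>n\<ge>M. dist (xs m) (xs n) < e" by blast
  qed
  then obtain x0 where lim: "xs \<longlonglongrightarrow> x0" using Cauchy_convergent_iff convergent_def by blast
  have "(\<lambda>n. f (xs n)) \<longlonglongrightarrow> f x0" using bounded_linear.tendsto[OF bl lim] .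
  moreover have "(\<lambda>n. f (xs n)) = (\<lambda>n. 1)" using xsS by (auto simp: S_def)
  ultimately have fx0: "f x0 = 1" using LIMSEQ_unique by (metis tendsto_const)
  have nx0: "norm x0 \<le> d"
  proof (rule field_le_epsilon)
    fix e :: real assume "0 < e"
    then obtain N0 :: nat where "1 / e < real N0" using reals_Archimedean2 by blast
    then have "1 / e < real N0 + 1" by simp
    then have N: "1 / (real N0 + 1) < e" using \<open>0 < e\<close>
      by (simp add: field_simps)
    define N where "N = N0"
    have N: "1 / (real N + 1) < e" using N unfolding N_def .
    have "(\<lambda>n. norm (xs n)) \<longlonglongrightarrow> norm x0" using lim by (rule tendsto_norm)
    moreover have "\<forall>n\<ge>N. norm (xs n) \<le> d + e"
    proof (intro allI impI)
      fix n assume "N \<le> n"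
      then have "1 / (real n + 1) \<le> 1 / (real N + 1)" by (auto simp: field_simps)
      then show "norm (xs n) \<le> d + e" using xsn[of n] N by linarith
    qed
    ultimately show "norm x0 \<le> d + e" by (intro LIMSEQ_le_const2) auto
  qed
  have x0nz: "x0 \<noteq> 0" using fx0 linear_0[OF bounded_linear.linear[OF bl]] by auto
  have orth: "cinner x0 k = 0" if "f k = 0" for k
  proof (cases "k = 0")
    case True then show ?thesis by simp
  next
    case False
    define l where "l = - cinner x0 k / of_real ((norm k)\<^sup>2)"
    have "x0 + scaleC l k \<in> S" using fx0 that by (simp add: S_def add sc)
    then have "norm x0 \<le> norm (x0 + scaleC l k)" using nx0 d_le by force
    then have "(norm x0)\<^sup>2 \<le> (norm (x0 + scaleC l k))\<^sup>2" by (simp add: power_mono)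
    moreover have "(norm (x0 + scaleC l k))\<^sup>2 = (norm x0)\<^sup>2 - (cmod (cinner x0 k))\<^sup>2 / (norm k)\<^sup>2"
      using norm_sq_proj[OF False, of x0] unfolding l_def .
    ultimately have "(cmod (cinner x0 k))\<^sup>2 / (norm k)\<^sup>2 \<le> 0" by linarith
    then have "(cmod (cinner x0 k))\<^sup>2 \<le> 0" using False by (simp add: divide_le_0_iff)
    then show ?thesis by simp
  qed
  define z where "z = scaleC (of_real (1 / (norm x0)\<^sup>2)) x0"
  have "f x = cinner x z" for x
  proof -
    have "f (x - scaleC (f x) x0) = 0"
      using add[of "x - scaleC (f x) x0" "scaleC (f x) x0"] by (simp add: sc fx0)
    then have "cinner x0 (x - scaleC (f x) x0) = 0" by (rule orth)
    then have "cinner x0 x = cnj (f x) * of_real ((norm x0)\<^sup>2)"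
      by (simp add: cinner_diff_right cinner_scaleC_right cinner_self)
    then have "cinner x x0 = f x * of_real ((norm x0)\<^sup>2)"
      by (metis cinner_commute complex_cnj_cnj complex_cnj_mult complex_cnj_complex_of_real)
    then show ?thesis using x0nz by (simp add: z_def cinner_scaleC_right)
  qed
  then show ?thesis by blast
qed

lemma bcl_add: "bounded_clinear T \<Longrightarrow> T (x + y) = T x + T y"
  by (simp add: bounded_clinear_def)
lemma bcl_scaleC: "bounded_clinear T \<Longrightarrow> T (scaleC a x) = scaleC a (T x)"
  by (simp add: bounded_clinear_def)
lemma bcl_bounded_linear: "bounded_clinear T \<Longrightarrow> bounded_linear T"
  unfolding bounded_clinear_def by (auto intro!: bounded_linear_intro simp: scaleR_scaleC)
lemma bcl_zero: "bounded_clinear T \<Longrightarrow> T 0 = 0"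
  using linear_0[OF bounded_linear.linear[OF bcl_bounded_linear]] by blast
lemma bcl_diff: "bounded_clinear T \<Longrightarrow> T (x - y) = T x - T y"
  using linear_diff[OF bounded_linear.linear[OF bcl_bounded_linear]] by blast
lemma bcl_scaleR: "bounded_clinear T \<Longrightarrow> T (scaleR r x) = scaleR r (T x)"
  using linear_scale[OF bounded_linear.linear[OF bcl_bounded_linear]] by blast
lemma bcl_sum: "bounded_clinear T \<Longrightarrow> T (sum f I) = (\<Sum>i\<in>I. T (f i))"
  using linear_sum[OF bounded_linear.linear[OF bcl_bounded_linear]] by blast
lemma bcl_onorm: "bounded_clinear T \<Longrightarrow> norm (T x) \<le> onorm T * norm x"
  using onorm[OF bcl_bounded_linear] by blast
lemma bcl_onorm_nonneg: "bounded_clinear T \<Longrightarrow> 0 \<le> onorm T"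
  using onorm_pos_le[OF bcl_bounded_linear] by blast
lemma bcl_tendsto: "bounded_clinear T \<Longrightarrow> (f \<longlongrightarrow> l) F \<Longrightarrow> ((\<lambda>n. T (f n)) \<longlongrightarrow> T l) F"
  using bounded_linear.tendsto[OF bcl_bounded_linear] by blast

lemma bcl_intro:
  assumes "\<And>x y. T (x + y) = T x + T y" "\<And>a x. T (scaleC a x) = scaleC a (T x)" "\<And>x. norm (T x) \<le> norm x * K"
  shows "bounded_clinear T"
  using assms unfolding bounded_clinear_def by blast

lemma bcl_comp: "bounded_clinear S \<Longrightarrow> bounded_clinear T \<Longrightarrow> bounded_clinear (S \<circ> T)"
  apply (rule bcl_intro[where K = "onorm S * onorm T"])
    apply (simp_all add: bcl_add bcl_scaleC)
  by (metis (no_types, opaque_lifting) bcl_onorm bcl_onorm_nonneg mult.assoc mult.commute mult_left_mono order_trans)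

definition selfadj :: "('a::complex_inner \<Rightarrow> 'a) \<Rightarrow> bool" where
  "selfadj A \<longleftrightarrow> (\<forall>x y. cinner (A x) y = cinner x (A y))"

lemma adj_exists:
  fixes T :: "'a::chilbert_space \<Rightarrow> 'b::chilbert_space"
  assumes "bounded_clinear T"
  shows "\<exists>S. \<forall>x y. cinner (T x) y = cinner x (S y)"
proof -
  have "\<forall>y. \<exists>z. \<forall>x. cinner (T x) y = cinner x z"
  proof
    fix y
    show "\<exists>z. \<forall>x. cinner (T x) y = cinner x z"
    proof (rule riesz[where K = "onorm T * norm y"])
      fix x show "cmod (cinner (T x) y) \<le> norm x * (onorm T * norm y)"
      proof -
        have "cmod (cinner (T x) y) \<le> norm (T x) * norm y" by (rule cauchy_schwarz)
        also have "\<dots> \<le> (onorm T * norm x) * norm y"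
          by (rule mult_right_mono[OF bcl_onorm[OF assms]]) simp
        finally show ?thesis by (simp add: algebra_simps)
      qed
    qed (simp_all add: bcl_add[OF assms] bcl_scaleC[OF assms] cinner_add_left cinner_scaleC_left)
  qed
  then show ?thesis by metis
qed

lemma adj_prop:
  fixes T :: "'a::chilbert_space \<Rightarrow> 'b::chilbert_space"
  assumes "bounded_clinear T"
  shows "cinner (T x) y = cinner x (adj T y)"
  using someI_ex[OF adj_exists[OF assms]] unfolding adj_def by blast

lemma adj_unique:
  fixes T :: "'a::complex_inner \<Rightarrow> 'b::complex_inner"
  assumes "\<And>x y. cinner (T x) y = cinner x (S y)"
  shows "adj T = S"
proof -
  have ex: "\<exists>S. \<forall>x y. cinner (T x) y = cinner x (S y)" using assms by blast
  have "\<forall>x y. cinner (T x) y = cinner x (adj T y)"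
    using someI_ex[OF ex] unfolding adj_def by blast
  then show ?thesis using assms by (intro ext cinner_ext) metis
qed

lemma adj_bcl:
  fixes T :: "'a::chilbert_space \<Rightarrow> 'b::chilbert_space"
  assumes T: "bounded_clinear T"
  shows "bounded_clinear (adj T)"
proof (rule bcl_intro[where K = "onorm T"])
  fix y z show "adj T (y + z) = adj T y + adj T z"
    by (rule cinner_ext) (simp add: adj_prop[OF T, symmetric] cinner_add_right)
next
  fix a y show "adj T (scaleC a y) = scaleC a (adj T y)"
    by (rule cinner_ext) (simp add: adj_prop[OF T, symmetric] cinner_scaleC_right)
next
  fix y
  show "norm (adj T y) \<le> norm y * onorm T"
  proof (cases "adj T y = 0")
    case True then show ?thesis using bcl_onorm_nonneg[OF T] by simp
  next
    case False
    have "(norm (adj T y))\<^sup>2 = Re (cinner (T (adj T y)) y)"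
      by (simp add: adj_prop[OF T] Re_cinner_self)
    also have "\<dots> \<le> norm (T (adj T y)) * norm y"
      using cauchy_schwarz complex_Re_le_cmod order_trans by blast
    also have "\<dots> \<le> onorm T * norm (adj T y) * norm y"
      using bcl_onorm[OF T] by (simp add: mult_right_mono)
    finally have "norm (adj T y) * norm (adj T y) \<le> (norm y * onorm T) * norm (adj T y)"
      by (simp add: power2_eq_square algebra_simps)
    then show ?thesis using False by simp
  qed
qed

lemma adj_adj:
  fixes T :: "'a::chilbert_space \<Rightarrow> 'b::chilbert_space"
  assumes T: "bounded_clinear T"
  shows "adj (adj T) = T"
proof (rule adj_unique)
  fix x y
  show "cinner (adj T x) y = cinner x (T y)"
    by (metis adj_prop[OF T] cinner_commute)
qed



lemma poly_op_upto:
  assumes "degree p < n"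
  shows "poly_op p A x = (\<Sum>i<n. coeff p i *\<^sub>R (A ^^ i) x)"
proof -
  have "poly_op p A x = (\<Sum>i\<in>{..degree p}. coeff p i *\<^sub>R (A ^^ i) x)" by (simp add: poly_op_def)
  also have "\<dots> = (\<Sum>i<n. coeff p i *\<^sub>R (A ^^ i) x)"
    using assms by (intro sum.mono_neutral_left) (auto simp: coeff_eq_0)
  finally show ?thesis .
qed

lemma poly_op_0 [simp]: "poly_op 0 A x = 0"
  by (simp add: poly_op_def)

lemma poly_op_pCons: "poly_op (pCons a p) A x = a *\<^sub>R x + poly_op p A (A x)"
proof -
  define m where "m = Suc (degree p)"
  have "degree (pCons a p) < Suc m" using degree_pCons_le[of a p] by (simp add: m_def)
  then have "poly_op (pCons a p) A x = (\<Sum>i<Suc m. coeff (pCons a p) i *\<^sub>R (A ^^ i) x)"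
    by (rule poly_op_upto)
  also have "\<dots> = a *\<^sub>R x + (\<Sum>i<m. coeff p i *\<^sub>R (A ^^ Suc i) x)"
    unfolding sum.lessThan_Suc_shift by simp
  also have "(\<Sum>i<m. coeff p i *\<^sub>R (A ^^ Suc i) x) = (\<Sum>i<m. coeff p i *\<^sub>R (A ^^ i) (A x))"
    by (simp add: funpow_Suc_right del: funpow.simps)
  also have "\<dots> = poly_op p A (A x)" by (rule poly_op_upto[symmetric]) (simp add: m_def)
  finally show ?thesis .
qed

lemma poly_op_pCons0: "poly_op (pCons 0 p) A x = poly_op p A (A x)"
  by (simp add: poly_op_pCons)

lemma poly_op_const [simp]: "poly_op [:c:] A x = c *\<^sub>R x"
  by (simp add: poly_op_pCons)

lemma poly_op_one [simp]: "poly_op 1 A x = x"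
  by (simp add: one_pCons poly_op_pCons)

lemma poly_op_X: "poly_op [:0, 1:] A x = A x"
  by (simp add: poly_op_pCons)

lemma poly_op_add: "poly_op (p + q) A x = poly_op p A x + poly_op q A x"
proof -
  define n where "n = Suc (max (degree p) (degree q))"
  have "degree (p + q) < n" using degree_add_le_max[of p q] by (simp add: n_def)
  then show ?thesis
    by (simp add: poly_op_upto[of _ n] n_def scaleR_add_left sum.distrib)
qed

lemma poly_op_diff: "poly_op (p - q) A x = poly_op p A x - poly_op q A x"
proof -
  define n where "n = Suc (max (degree p) (degree q))"
  have "degree (p - q) < n" using degree_diff_le_max[of p q] by (simp add: n_def)
  then show ?thesis
    by (simp add: poly_op_upto[of _ n] n_def scaleR_diff_left sum_subtractf)
qed

lemma poly_op_smult: "poly_op (smult c p) A x = c *\<^sub>R poly_op p A x"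
proof -
  have "degree (smult c p) < Suc (degree p)" using degree_smult_le[of c p] by simp
  then have "poly_op (smult c p) A x = (\<Sum>i<Suc (degree p). coeff (smult c p) i *\<^sub>R (A ^^ i) x)"
    by (rule poly_op_upto)
  moreover have "poly_op p A x = (\<Sum>i<Suc (degree p). coeff p i *\<^sub>R (A ^^ i) x)"
    by (rule poly_op_upto) simp
  ultimately show ?thesis by (simp only: coeff_smult scaleR_scaleR scaleR_sum_right)
qed

lemma poly_op_sum: "poly_op (\<Sum>j\<in>J. f j) A x = (\<Sum>j\<in>J. poly_op (f j) A x)"
  by (induct J rule: infinite_finite_induct) (auto simp: poly_op_add)

lemma poly_op_lin:
  assumes A: "bounded_clinear A"
  shows "poly_op p A (x + y) = poly_op p A x + poly_op p A y"
    and "poly_op p A (scaleC c x) = scaleC c (poly_op p A x)"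
proof -
  have "\<forall>x y. poly_op p A (x + y) = poly_op p A x + poly_op p A y \<and>
      poly_op p A (scaleC c x) = scaleC c (poly_op p A x)"
  proof (induct p rule: pCons_induct)
    case 0 then show ?case by simp
  next
    case (pCons a p)
    then show ?case
      by (simp add: poly_op_pCons bcl_add[OF A] bcl_scaleC[OF A] scaleR_add_right scaleC_add_right scaleC_scaleR_comm)
  qed
  then show "poly_op p A (x + y) = poly_op p A x + poly_op p A y"
    "poly_op p A (scaleC c x) = scaleC c (poly_op p A x)" by auto
qed

lemma poly_op_bound:
  assumes A: "bounded_clinear A"
  shows "\<exists>K. \<forall>x. norm (poly_op p A x) \<le> norm x * K"
proof (induct p rule: pCons_induct)
  case 0 then show ?case by (intro exI[of _ 0]) simp
next
  case (pCons a p)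
  then obtain K where K: "\<And>x. norm (poly_op p A x) \<le> norm x * K" by blast
  have "norm (poly_op (pCons a p) A x) \<le> norm x * (\<bar>a\<bar> + onorm A * \<bar>K\<bar>)" for x
  proof -
    have "norm (poly_op (pCons a p) A x) \<le> \<bar>a\<bar> * norm x + norm (poly_op p A (A x))"
      by (simp add: poly_op_pCons norm_triangle_le)
    also have "norm (poly_op p A (A x)) \<le> norm (A x) * \<bar>K\<bar>"
      using K[of "A x"] by (meson abs_ge_self mult_left_mono norm_ge_zero order_trans)
    also have "\<dots> \<le> (onorm A * norm x) * \<bar>K\<bar>"
      by (rule mult_right_mono[OF bcl_onorm[OF A]]) simp
    finally show ?thesis by (simp add: algebra_simps)
  qed
  then show ?case by blast
qed

lemma poly_op_bcl:
  assumes A: "bounded_clinear A"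
  shows "bounded_clinear (poly_op p A)"
  using poly_op_lin[OF A] poly_op_bound[OF A] unfolding bounded_clinear_def by blast

lemma poly_op_comm:
  assumes A: "bounded_clinear A"
  shows "A (poly_op p A x) = poly_op p A (A x)"
proof (induct p arbitrary: x rule: pCons_induct)
  case 0 then show ?case by (simp add: bcl_zero[OF A])
next
  case (pCons a p)
  then show ?case by (simp add: poly_op_pCons bcl_add[OF A] bcl_scaleR[OF A])
qed

lemma poly_op_mult:
  assumes A: "bounded_clinear A"
  shows "poly_op (p * q) A x = poly_op p A (poly_op q A x)"
proof (induct p arbitrary: x rule: pCons_induct)
  case 0 then show ?case by simp
next
  case (pCons a p)
  have "poly_op (pCons a p * q) A x = a *\<^sub>R poly_op q A x + poly_op (p * q) A (A x)"
    by (simp add: mult_pCons_left poly_op_add poly_op_smult poly_op_pCons0)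
  also have "\<dots> = a *\<^sub>R poly_op q A x + poly_op p A (A (poly_op q A x))"
    by (simp add: pCons poly_op_comm[OF A])
  finally show ?case by (simp add: poly_op_pCons)
qed

lemma poly_op_mult_comm:
  assumes A: "bounded_clinear A"
  shows "poly_op p A (poly_op q A x) = poly_op q A (poly_op p A x)"
  by (metis poly_op_mult[OF A] mult.commute)

lemma poly_op_selfadj:
  assumes A: "bounded_clinear A" and sa: "selfadj A"
  shows "cinner (poly_op p A x) y = cinner x (poly_op p A y)"
proof (induct p arbitrary: x y rule: pCons_induct)
  case 0 then show ?case by simp
next
  case (pCons a p)
  have "cinner (poly_op (pCons a p) A x) y = of_real a * cinner x y + cinner (A x) (poly_op p A y)"
    by (simp add: poly_op_pCons cinner_add_left cinner_scaleR_left pCons)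
  also have "\<dots> = of_real a * cinner x y + cinner x (A (poly_op p A y))"
    using sa by (simp add: selfadj_def)
  also have "\<dots> = cinner x (poly_op (pCons a p) A y)"
    by (simp add: poly_op_pCons cinner_add_right cinner_scaleR_right poly_op_comm[OF A])
  finally show ?case .
qed

lemma poly_op_zero_op: "poly_op p (\<lambda>x. 0) x = poly p 0 *\<^sub>R x"
proof (induct p arbitrary: x rule: pCons_induct)
  case 0 then show ?case by simp
next
  case (pCons a p)
  then show ?case by (simp add: poly_op_pCons)
qed



section \<open>Numeric lemmas for Bernstein degree elevation\<close>

lemma prod_diff_le:
  fixes u v :: "nat \<Rightarrow> real"
  assumes "\<And>i. i < m \<Longrightarrow> \<bar>u i\<bar> \<le> 1" "\<And>i. i < m \<Longrightarrow> \<bar>v i\<bar> \<le> 1"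
  shows "\<bar>(\<Prod>i<m. u i) - (\<Prod>i<m. v i)\<bar> \<le> (\<Sum>i<m. \<bar>u i - v i\<bar>)"
  using assms
proof (induct m)
  case 0 then show ?case by simp
next
  case (Suc m)
  have IH: "\<bar>(\<Prod>i<m. u i) - (\<Prod>i<m. v i)\<bar> \<le> (\<Sum>i<m. \<bar>u i - v i\<bar>)"
    using Suc by auto
  have pv: "\<bar>\<Prod>i<m. v i\<bar> \<le> 1"
    unfolding abs_prod using Suc.prems(2) by (intro prod_le_1) auto
  have um: "\<bar>u m\<bar> \<le> 1" using Suc.prems(1) by auto
  have "(\<Prod>i<Suc m. u i) - (\<Prod>i<Suc m. v i) =
      u m * ((\<Prod>i<m. u i) - (\<Prod>i<m. v i)) + (u m - v m) * (\<Prod>i<m. v i)"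
    by (simp add: algebra_simps)
  then have "\<bar>(\<Prod>i<Suc m. u i) - (\<Prod>i<Suc m. v i)\<bar> \<le>
      \<bar>u m\<bar> * \<bar>(\<Prod>i<m. u i) - (\<Prod>i<m. v i)\<bar> + \<bar>u m - v m\<bar> * \<bar>\<Prod>i<m. v i\<bar>"
    by (metis abs_mult abs_triangle_ineq)
  also have "\<dots> \<le> 1 * \<bar>(\<Prod>i<m. u i) - (\<Prod>i<m. v i)\<bar> + \<bar>u m - v m\<bar> * 1"
    by (intro add_mono mult_mono) (use um pv in auto)
  also have "\<dots> \<le> (\<Sum>i<Suc m. \<bar>u i - v i\<bar>)" using IH by simp
  finally show ?case .
qed

lemma choose_ratio_prod:
  assumes "m \<le> N"
  shows "real (j choose m) / real (N choose m) = (\<Prod>i<m. (real j - real i) / (real N - real i))"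
proof -
  have a: "real (j choose m) * fact m = (\<Prod>i<m. real j - real i)"
    using gbinomial_mult_fact'[of "real j" m] by (simp add: binomial_gbinomial atLeast0LessThan)
  have b: "real (N choose m) * fact m = (\<Prod>i<m. real N - real i)"
    using gbinomial_mult_fact'[of "real N" m] by (simp add: binomial_gbinomial atLeast0LessThan)
  have "real (j choose m) / real (N choose m) = (real (j choose m) * fact m) / (real (N choose m) * fact m)"
    by simp
  also have "\<dots> = (\<Prod>i<m. real j - real i) / (\<Prod>i<m. real N - real i)" using a b by simp
  also have "\<dots> = (\<Prod>i<m. (real j - real i) / (real N - real i))" by (simp add: prod_dividef)
  finally show ?thesis .
qed

lemma ratio_factor_bounds:
  fixes i j m N :: nat
  assumes "i < m" "2 * m \<le> N" "j \<le> N"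
  shows "\<bar>(real j - real i) / (real N - real i)\<bar> \<le> 1"
    and "\<bar>(real j - real i) / (real N - real i) - real j / real N\<bar> \<le> 2 * real m / real N"
proof -
  have Ni: "real N - real i > 0" using assms by linarith
  have N0: "real N > 0" using assms by linarith
  show "\<bar>(real j - real i) / (real N - real i)\<bar> \<le> 1"
    using Ni assms by (simp add: abs_le_iff divide_le_eq_1 le_divide_eq)
  have eq: "(real j - real i) / (real N - real i) - real j / real N = - (real i * (real N - real j)) / (real N * (real N - real i))"
    using Ni N0 by (simp add: field_simps)
  have "real i * (real N - real j) \<le> real i * real N" by (simp add: mult_left_mono)
  have "\<bar>(real j - real i) / (real N - real i) - real j / real N\<bar> = real i * (real N - real j) / (real N * (real N - real i))"
    unfolding eq using Ni N0 assms by (simp add: abs_minus_cancel)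
  also have "\<dots> \<le> real i * real N / (real N * (real N - real i))"
    using Ni N0 assms by (intro divide_right_mono mult_left_mono) auto
  also have "\<dots> = real i / (real N - real i)" using N0 by simp
  also have "\<dots> \<le> 2 * real m / real N"
  proof -
    have "real i * real N \<le> 2 * real m * (real N - real i)"
    proof -
      have "real i * real N \<le> real m * real N" using assms by (simp add: mult_right_mono)
      also have "\<dots> \<le> 2 * real m * (real N - real i)"
      proof -
        have "real (2 * m) \<le> real N" "real i \<le> real m" using assms by (simp_all only: of_nat_le_iff)
        then have "real N \<le> 2 * (real N - real i)" by simp
        from mult_left_mono[OF this, of "real m"] show ?thesis by (simp add: algebra_simps)
      qed
      finally show ?thesis .
    qed
    then show ?thesis using Ni N0 by (simp add: field_simps)
  qed
  finally show "\<bar>(real j - real i) / (real N - real i) - real j / real N\<bar> \<le> 2 * real m / real N" .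
qed

lemma choose_ratio_approx:
  fixes j m N :: nat
  assumes "2 * m \<le> N" "j \<le> N" "0 < N"
  shows "\<bar>real (j choose m) / real (N choose m) - (real j / real N) ^ m\<bar> \<le> 2 * real m ^ 2 / real N"
proof -
  have "\<bar>real (j choose m) / real (N choose m) - (real j / real N) ^ m\<bar> =
      \<bar>(\<Prod>i<m. (real j - real i) / (real N - real i)) - (\<Prod>i<m. real j / real N)\<bar>"
    using assms by (simp add: choose_ratio_prod)
  also have "\<dots> \<le> (\<Sum>i<m. \<bar>(real j - real i) / (real N - real i) - real j / real N\<bar>)"
    using ratio_factor_bounds(1)[OF _ assms(1,2)] assms by (intro prod_diff_le) auto
  also have "\<dots> \<le> (\<Sum>i<m. 2 * real m / real N)"
    using ratio_factor_bounds(2)[OF _ assms(1,2)] by (intro sum_mono) auto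
  also have "\<dots> = 2 * real m ^ 2 / real N" by (simp add: power2_eq_square)
  finally show ?thesis .
qed

lemma binomial_weighted:
  fixes s t :: real
  assumes "m \<le> N"
  shows "(\<Sum>j\<le>N. real (j choose m) * (real (N choose j) * s ^ j * t ^ (N - j))) = real (N choose m) * s ^ m * (s + t) ^ (N - m)"
proof -
  have "(\<Sum>j\<le>N. real (j choose m) * (real (N choose j) * s ^ j * t ^ (N - j))) =
        (\<Sum>j\<in>{m..N}. real (j choose m) * (real (N choose j) * s ^ j * t ^ (N - j)))"
    by (rule sum.mono_neutral_right) auto
  also have "\<dots> = (\<Sum>j\<in>{m..N}. real (N choose m) * (real ((N - m) choose (j - m)) * s ^ j * t ^ (N - j)))"
  proof (rule sum.cong[OF refl])
    fix j assume "j \<in> {m..N}"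
    then have "(N choose j) * (j choose m) = (N choose m) * ((N - m) choose (j - m))"
      by (intro choose_mult) auto
    then have "real (j choose m) * real (N choose j) = real (N choose m) * real ((N - m) choose (j - m))"
      by (metis of_nat_mult mult.commute)
    then show "real (j choose m) * (real (N choose j) * s ^ j * t ^ (N - j)) =
        real (N choose m) * (real ((N - m) choose (j - m)) * s ^ j * t ^ (N - j))"
      by (metis (no_types, lifting) mult.assoc)
  qed
  also have "\<dots> = (\<Sum>i\<in>{0..N-m}. real (N choose m) * (real ((N - m) choose i) * s ^ (i + m) * t ^ (N - (i + m))))"
  proof -
    have "{m..N} = {0+m..(N-m)+m}" using assms by simp
    then show ?thesis by (simp only: sum.shift_bounds_cl_nat_ivl) simp
  qed
  also have "\<dots> = real (N choose m) * s ^ m * (\<Sum>i\<le>N-m. real ((N - m) choose i) * s ^ i * t ^ (N - m - i))"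
    by (simp add: sum_distrib_left atLeast0AtMost power_add algebra_simps)
  also have "\<dots> = real (N choose m) * s ^ m * (s + t) ^ (N - m)"
    by (simp add: binomial_ring)
  finally show ?thesis .
qed



section \<open>Bernstein expansion\<close>

definition bpoly :: "real \<Rightarrow> nat \<Rightarrow> nat \<Rightarrow> real poly" where
  "bpoly K N j = smult (real (N choose j) / K ^ N) ([:0, 1:] ^ j * [:K, -1:] ^ (N - j))"

lemma poly_bpoly: "poly (bpoly K N j) s = real (N choose j) / K ^ N * (s ^ j * (K - s) ^ (N - j))"
  by (simp add: bpoly_def poly_power)

lemma bpoly_sum:
  assumes "K \<noteq> 0"
  shows "(\<Sum>j\<le>N. bpoly K N j) = 1"
proof -
  have "poly (\<Sum>j\<le>N. bpoly K N j) s = poly 1 s" for s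
  proof -
    have "poly (\<Sum>j\<le>N. bpoly K N j) s = (\<Sum>j\<le>N. real (N choose j) * s ^ j * (K - s) ^ (N - j)) / K ^ N"
      by (simp add: poly_sum poly_bpoly sum_divide_distrib algebra_simps)
    also have "\<dots> = (s + (K - s)) ^ N / K ^ N" by (simp only: binomial_ring)
    also have "\<dots> = 1" using assms by simp
    finally show ?thesis by simp
  qed
  then show ?thesis using poly_eq_poly_eq_iff by blast
qed

definition bcoef :: "real poly \<Rightarrow> real \<Rightarrow> nat \<Rightarrow> nat \<Rightarrow> real" where
  "bcoef q K N j = (\<Sum>m\<le>degree q. coeff q m * K ^ m * (real (j choose m) / real (N choose m)))"

lemma monom_expand:
  assumes "K \<noteq> 0" "m \<le> N"
  shows "s ^ m = (\<Sum>j\<le>N. K ^ m * (real (j choose m) / real (N choose m)) * poly (bpoly K N j) s)"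
proof -
  have Nm: "real (N choose m) \<noteq> 0" using assms by simp
  have "(\<Sum>j\<le>N. K ^ m * (real (j choose m) / real (N choose m)) * poly (bpoly K N j) s) =
      K ^ m / (real (N choose m) * K ^ N) * (\<Sum>j\<le>N. real (j choose m) * (real (N choose j) * s ^ j * (K - s) ^ (N - j)))"
    by (simp add: poly_bpoly sum_distrib_left algebra_simps)
  also have "\<dots> = K ^ m / (real (N choose m) * K ^ N) * (real (N choose m) * s ^ m * K ^ (N - m))"
    using binomial_weighted[OF assms(2), of s "K - s"] by simp
  also have "\<dots> = s ^ m * (K ^ m * K ^ (N - m) / K ^ N)" using Nm by (simp add: field_simps)
  also have "K ^ m * K ^ (N - m) = K ^ N" using assms by (simp add: power_add[symmetric])
  finally show ?thesis using assms by simp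
qed

lemma poly_expand:
  assumes "K \<noteq> 0" "degree q \<le> N"
  shows "q = (\<Sum>j\<le>N. smult (bcoef q K N j) (bpoly K N j))"
proof -
  have "poly q s = poly (\<Sum>j\<le>N. smult (bcoef q K N j) (bpoly K N j)) s" for s
  proof -
    have "poly q s = (\<Sum>m\<le>degree q. coeff q m * s ^ m)" by (simp add: poly_altdef)
    also have "\<dots> = (\<Sum>m\<le>degree q. coeff q m *
        (\<Sum>j\<le>N. K ^ m * (real (j choose m) / real (N choose m)) * poly (bpoly K N j) s))"
    proof (intro sum.cong refl)
      fix m assume "m \<in> {..degree q}"
      then have "m \<le> N" using assms by auto
      then have eq: "s ^ m = (\<Sum>j\<le>N. K ^ m * (real (j choose m) / real (N choose m)) * poly (bpoly K N j) s)"
        by (rule monom_expand[OF assms(1)])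
      show "coeff q m * s ^ m = coeff q m *
        (\<Sum>j\<le>N. K ^ m * (real (j choose m) / real (N choose m)) * poly (bpoly K N j) s)"
        using eq by (rule arg_cong)
    qed
    also have "\<dots> = (\<Sum>j\<le>N. bcoef q K N j * poly (bpoly K N j) s)"
      unfolding bcoef_def sum_distrib_left sum_distrib_right
      by (subst sum.swap) (simp add: algebra_simps)
    also have "\<dots> = poly (\<Sum>j\<le>N. smult (bcoef q K N j) (bpoly K N j)) s"
      by (simp add: poly_sum)
    finally show ?thesis .
  qed
  then show ?thesis using poly_eq_poly_eq_iff by blast
qed

lemma bcoef_approx:
  assumes "2 * degree q \<le> N" "j \<le> N" "0 < N"
  shows "\<bar>bcoef q K N j - poly q (K * real j / real N)\<bar> \<le>
    (\<Sum>m\<le>degree q. \<bar>coeff q m\<bar> * \<bar>K\<bar> ^ m * (2 * real m ^ 2)) / real N"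
proof -
  have "poly q (K * real j / real N) = (\<Sum>m\<le>degree q. coeff q m * K ^ m * (real j / real N) ^ m)"
    by (simp add: poly_altdef power_mult_distrib power_divide algebra_simps)
  then have "bcoef q K N j - poly q (K * real j / real N) =
      (\<Sum>m\<le>degree q. coeff q m * K ^ m * (real (j choose m) / real (N choose m) - (real j / real N) ^ m))"
    by (simp add: bcoef_def sum_subtractf algebra_simps)
  then have "\<bar>bcoef q K N j - poly q (K * real j / real N)\<bar> \<le>
      (\<Sum>m\<le>degree q. \<bar>coeff q m * K ^ m * (real (j choose m) / real (N choose m) - (real j / real N) ^ m)\<bar>)"
    by (simp add: sum_abs)
  also have "\<dots> \<le> (\<Sum>m\<le>degree q. \<bar>coeff q m\<bar> * \<bar>K\<bar> ^ m * (2 * real m ^ 2 / real N))"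
  proof (intro sum_mono)
    fix m assume "m \<in> {..degree q}"
    then have "2 * m \<le> N" using assms by auto
    then have bnd: "\<bar>real (j choose m) / real (N choose m) - (real j / real N) ^ m\<bar> \<le> 2 * real m ^ 2 / real N"
      using assms by (intro choose_ratio_approx) auto
    then show "\<bar>coeff q m * K ^ m * (real (j choose m) / real (N choose m) - (real j / real N) ^ m)\<bar>
        \<le> \<bar>coeff q m\<bar> * \<bar>K\<bar> ^ m * (2 * real m ^ 2 / real N)"
    proof -
      have "\<bar>coeff q m * K ^ m * (real (j choose m) / real (N choose m) - (real j / real N) ^ m)\<bar>
          = \<bar>coeff q m\<bar> * \<bar>K\<bar> ^ m * \<bar>real (j choose m) / real (N choose m) - (real j / real N) ^ m\<bar>"
        by (simp add: abs_mult power_abs)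
      also have "\<dots> \<le> \<bar>coeff q m\<bar> * \<bar>K\<bar> ^ m * (2 * real m ^ 2 / real N)"
        by (rule mult_left_mono[OF bnd]) simp
      finally show ?thesis .
    qed
  qed
  also have "\<dots> = (\<Sum>m\<le>degree q. \<bar>coeff q m\<bar> * \<bar>K\<bar> ^ m * (2 * real m ^ 2)) / real N"
    by (simp add: sum_divide_distrib)
  finally show ?thesis .
qed



section \<open>Positive operators and the polynomial norm bound\<close>

definition posop :: "('a::complex_inner \<Rightarrow> 'a) \<Rightarrow> bool" where
  "posop A \<longleftrightarrow> bounded_clinear A \<and> selfadj A \<and> (\<forall>x. 0 \<le> Re (cinner (A x) x))"

definition ppos :: "real poly \<Rightarrow> ('a::complex_inner \<Rightarrow> 'a) \<Rightarrow> bool" where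
  "ppos p A \<longleftrightarrow> (\<forall>x. 0 \<le> Re (cinner (poly_op p A x) x))"

lemma posop_bcl: "posop A \<Longrightarrow> bounded_clinear A" by (simp add: posop_def)
lemma posop_sa: "posop A \<Longrightarrow> selfadj A" by (simp add: posop_def)
lemma posop_pos: "posop A \<Longrightarrow> 0 \<le> Re (cinner (A x) x)" by (simp add: posop_def)

lemma ppos_add: "ppos p A \<Longrightarrow> ppos q A \<Longrightarrow> ppos (p + q) A"
  by (simp add: ppos_def poly_op_add cinner_add_left)

lemma ppos_smult: "ppos p A \<Longrightarrow> 0 \<le> c \<Longrightarrow> ppos (smult c p) A"
  by (simp add: ppos_def poly_op_smult cinner_scaleR_left)

lemma ppos_one: "ppos 1 A"
  by (simp add: ppos_def Re_cinner_self)

lemma ppos_X: "posop A \<Longrightarrow> ppos [:0, 1:] A"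
  by (simp add: ppos_def poly_op_X posop_pos)

lemma Re_cinner_le_onorm:
  assumes "bounded_clinear A"
  shows "Re (cinner (A x) x) \<le> onorm A * (norm x)\<^sup>2"
proof -
  have "Re (cinner (A x) x) \<le> norm (A x) * norm x"
    using cauchy_schwarz complex_Re_le_cmod order_trans by blast
  also have "\<dots> \<le> onorm A * norm x * norm x"
    by (rule mult_right_mono[OF bcl_onorm[OF assms]]) simp
  finally show ?thesis by (simp add: power2_eq_square mult.assoc)
qed

lemma ppos_Y: "posop A \<Longrightarrow> ppos [:onorm A, -1:] A"
proof -
  assume A: "posop A"
  have "poly_op [:onorm A, -1:] A x = onorm A *\<^sub>R x - A x" for x
    by (simp add: poly_op_pCons)
  then show ?thesis
    using Re_cinner_le_onorm[OF posop_bcl[OF A]]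
    by (simp add: ppos_def cinner_diff_left cinner_scaleR_left Re_cinner_self)
qed

lemma ppos_sq:
  assumes A: "posop A" and X: "ppos X A"
  shows "ppos (W * W * X) A"
  unfolding ppos_def
proof
  fix x
  have Ab: "bounded_clinear A" using A by (rule posop_bcl)
  have "cinner (poly_op (W * W * X) A x) x = cinner (poly_op W A (poly_op X A (poly_op W A x))) x"
    by (simp add: poly_op_mult[OF Ab] poly_op_mult_comm[OF Ab, of X W])
  also have "\<dots> = cinner (poly_op X A (poly_op W A x)) (poly_op W A x)"
    using poly_op_selfadj[OF Ab posop_sa[OF A]] by simp
  finally show "0 \<le> Re (cinner (poly_op (W * W * X) A x) x)" using X by (simp add: ppos_def)
qed

lemma ppos_XY:
  assumes A: "posop A" and K: "onorm A \<noteq> 0"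
  shows "ppos ([:0, 1:] * [:onorm A, -1:]) A"
proof -
  define X :: "real poly" where "X = [:0, 1:]"
  define Y where "Y = [:onorm A, -1:]"
  have eq: "X * Y = smult (1 / onorm A) (Y * Y * X + X * X * Y)"
  proof -
    have "poly (X * Y) s = poly (smult (1 / onorm A) (Y * Y * X + X * X * Y)) s" for s
      using K by (simp add: X_def Y_def field_simps)
    then show ?thesis using poly_eq_poly_eq_iff by blast
  qed
  have "ppos (Y * Y * X + X * X * Y) A"
    using ppos_X[OF A] ppos_Y[OF A] by (intro ppos_add ppos_sq[OF A]) (simp_all add: X_def Y_def)
  moreover have "0 \<le> 1 / onorm A" using onorm_pos_le[OF bcl_bounded_linear[OF posop_bcl[OF A]]] by simp
  ultimately have "ppos (smult (1 / onorm A) (Y * Y * X + X * X * Y)) A" by (rule ppos_smult)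
  then have "ppos (X * Y) A" by (simp only: eq)
  then show ?thesis by (simp only: X_def Y_def)
qed

lemma ppos_XY_pow:
  assumes A: "posop A" and K: "onorm A \<noteq> 0"
  shows "ppos ([:0, 1:] ^ j * [:onorm A, -1:] ^ k) A"
proof -
  define X :: "real poly" where "X = [:0, 1:]"
  define Y where "Y = [:onorm A, -1:]"
  define W where "W = X ^ (j div 2) * Y ^ (k div 2)"
  have j: "j = j div 2 + j div 2 + j mod 2" and k: "k = k div 2 + k div 2 + k mod 2" by presburger+
  have eq: "X ^ j * Y ^ k = W * W * (X ^ (j mod 2) * Y ^ (k mod 2))"
    unfolding W_def by (subst j, subst k, simp only: power_add) (simp add: algebra_simps)
  have "ppos (X ^ (j mod 2) * Y ^ (k mod 2)) A"
  proof -
    have "j mod 2 = 0 \<or> j mod 2 = 1" "k mod 2 = 0 \<or> k mod 2 = 1" by auto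
    then show ?thesis
      using ppos_one ppos_X[OF A] ppos_Y[OF A] ppos_XY[OF A K]
      by (auto simp: X_def Y_def)
  qed
  then have "ppos (W * W * (X ^ (j mod 2) * Y ^ (k mod 2))) A" by (rule ppos_sq[OF A])
  then have "ppos (X ^ j * Y ^ k) A" by (simp only: eq)
  then show ?thesis by (simp only: X_def Y_def)
qed

lemma ppos_bpoly:
  assumes A: "posop A" and K: "onorm A \<noteq> 0"
  shows "ppos (bpoly (onorm A) N j) A"
  unfolding bpoly_def
  using onorm_pos_le[OF bcl_bounded_linear[OF posop_bcl[OF A]]]
  by (intro ppos_smult ppos_XY_pow[OF A K]) simp

lemma le_of_eventually_le:
  fixes a d E :: real
  assumes "0 \<le> E" "\<And>N. N0 \<le> N \<Longrightarrow> 0 < N \<Longrightarrow> a \<le> d + E / real N"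
  shows "a \<le> d"
proof (rule field_le_epsilon)
  fix e :: real assume e: "0 < e"
  obtain N1 :: nat where N1: "E / e < real N1" using reals_Archimedean2 by blast
  define N where "N = max (max N0 N1) 1"
  have N: "N0 \<le> N" "0 < N" "E / e < real N" using N1 by (auto simp: N_def)
  have "E / real N \<le> e"
    using N e assms(1) by (simp add: field_simps)
  then show "a \<le> d + e" using assms(2)[OF N(1,2)] by linarith
qed

lemma quad_bound:
  assumes A: "posop A" and K: "onorm A \<noteq> 0"
    and q: "\<And>s. s \<in> {0..onorm A} \<Longrightarrow> poly q s \<le> d"
  shows "Re (cinner (poly_op q A x) x) \<le> d * (norm x)\<^sup>2"
proof -
  define K where "K = onorm A"
  have K0: "0 < K" using K onorm_pos_le[OF bcl_bounded_linear[OF posop_bcl[OF A]]] by (simp add: K_def)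
  define E where "E = (\<Sum>m\<le>degree q. \<bar>coeff q m\<bar> * \<bar>K\<bar> ^ m * (2 * real m ^ 2)) * (norm x)\<^sup>2"
  have E0: "0 \<le> E" unfolding E_def by (intro mult_nonneg_nonneg sum_nonneg) auto
  show ?thesis
  proof (rule le_of_eventually_le[OF E0, of "2 * degree q"])
    fix N :: nat assume N: "2 * degree q \<le> N" "0 < N"
    define r where "r j = Re (cinner (poly_op (bpoly K N j) A x) x)" for j
    have r0: "0 \<le> r j" for j using ppos_bpoly[OF A K] by (simp add: r_def ppos_def K_def)
    have rsum: "(\<Sum>j\<le>N. r j) = (norm x)\<^sup>2"
    proof -
      have "(\<Sum>j\<le>N. r j) = Re (cinner (poly_op (\<Sum>j\<le>N. bpoly K N j) A x) x)"
        by (simp add: r_def poly_op_sum cinner_sum_left)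
      also have "\<dots> = (norm x)\<^sup>2" using K0 by (simp add: bpoly_sum Re_cinner_self)
      finally show ?thesis .
    qed
    define D where "D = (\<Sum>m\<le>degree q. \<bar>coeff q m\<bar> * \<bar>K\<bar> ^ m * (2 * real m ^ 2)) / real N"
    have bj: "bcoef q K N j \<le> d + D" if "j \<le> N" for j
    proof -
      have "K * real j / real N \<in> {0..K}" using K0 N that by (auto simp: field_simps)
      then have "poly q (K * real j / real N) \<le> d" using q unfolding K_def by blast
      moreover have "\<bar>bcoef q K N j - poly q (K * real j / real N)\<bar> \<le> D"
        unfolding D_def using N that by (intro bcoef_approx) auto
      ultimately show ?thesis by linarith
    qed
    have "degree q \<le> N" using N by simp
    then have "Re (cinner (poly_op q A x) x) = Re (cinner (poly_op (\<Sum>j\<le>N. smult (bcoef q K N j) (bpoly K N j)) A x) x)"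
      using poly_expand[of K q N] K0 by simp
    also have "\<dots> = (\<Sum>j\<le>N. bcoef q K N j * r j)"
      by (simp add: r_def poly_op_sum poly_op_smult cinner_sum_left cinner_scaleR_left)
    also have "\<dots> \<le> (\<Sum>j\<le>N. (d + D) * r j)"
      using bj r0 by (intro sum_mono mult_right_mono) auto
    also have "\<dots> = (d + D) * (norm x)\<^sup>2" by (simp add: sum_distrib_left[symmetric] rsum)
    also have "\<dots> = d * (norm x)\<^sup>2 + E / real N" by (simp add: D_def E_def algebra_simps)
    finally show "Re (cinner (poly_op q A x) x) \<le> d * (norm x)\<^sup>2 + E / real N" .
  qed
qed

lemma poly_op_norm_bound:
  assumes A: "posop A" and p: "\<And>s. s \<in> {0..onorm A} \<Longrightarrow> \<bar>poly p s\<bar> \<le> c"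
  shows "norm (poly_op p A x) \<le> c * norm x"
proof (cases "onorm A = 0")
  case True
  have "A = (\<lambda>x. 0)"
    using True onorm_eq_0[OF bcl_bounded_linear[OF posop_bcl[OF A]]] by auto
  then have "poly_op p A x = poly p 0 *\<^sub>R x" by (simp add: poly_op_zero_op)
  moreover have "\<bar>poly p 0\<bar> \<le> c" using p True by simp
  ultimately show ?thesis by (simp add: mult_right_mono)
next
  case False
  have Ab: "bounded_clinear A" using A by (rule posop_bcl)
  have c0: "0 \<le> c" using p[of 0] onorm_pos_le[OF bcl_bounded_linear[OF Ab]] by auto
  have "cinner (poly_op p A (poly_op p A x)) x = cinner (poly_op p A x) (poly_op p A x)"
    by (rule poly_op_selfadj[OF Ab posop_sa[OF A]])
  then have "(norm (poly_op p A x))\<^sup>2 = Re (cinner (poly_op p A (poly_op p A x)) x)"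
    by (simp add: Re_cinner_self)
  also have "\<dots> = Re (cinner (poly_op (p * p) A x) x)" by (simp add: poly_op_mult[OF Ab])
  also have "\<dots> \<le> c\<^sup>2 * (norm x)\<^sup>2"
  proof (rule quad_bound[OF A False])
    fix s assume "s \<in> {0..onorm A}"
    then have "\<bar>poly p s\<bar> \<le> c" by (rule p)
    then have "\<bar>poly p s\<bar>\<^sup>2 \<le> c\<^sup>2" by (rule power_mono) simp
    then have "(poly p s)\<^sup>2 \<le> c\<^sup>2" by simp
    then show "poly (p * p) s \<le> c\<^sup>2" by (simp add: power2_eq_square)
  qed
  finally have "(norm (poly_op p A x))\<^sup>2 \<le> (c * norm x)\<^sup>2" by (simp add: power_mult_distrib)
  then show ?thesis by (rule power2_le_imp_le) (simp add: c0)
qed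



section \<open>Weierstrass approximation by real polynomials\<close>

lemma weierstrass_poly:
  fixes f :: "real \<Rightarrow> real"
  assumes L: "0 < L" and f: "continuous_on {0..L} f"
  shows "\<exists>P. uniform_limit {0..L} (\<lambda>n. poly (P n)) f sequentially"
proof -
  define g where "g u = f (L * u)" for u
  have g: "continuous_on {0..1} g"
    unfolding g_def
    by (rule continuous_on_compose2[OF f]) (auto intro!: continuous_intros simp: L mult_le_cancel_left1 less_imp_le)
  define P where "P n = (\<Sum>k\<le>n. smult (g (real k / real n) * real (n choose k)) ([:0, 1 / L:] ^ k * [:1, - 1 / L:] ^ (n - k)))" for n
  have polyP: "poly (P n) s = (\<Sum>k\<le>n. g (real k / real n) * Bernstein n k (s / L))" for n s
    by (simp add: P_def poly_sum poly_power Bernstein_def algebra_simps)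
  have "uniform_limit {0..L} (\<lambda>n. poly (P n)) f sequentially"
  proof (rule uniform_limitI)
    fix e :: real assume e: "0 < e"
    obtain N where N: "\<And>n x. N \<le> n \<Longrightarrow> x \<in> {0..1} \<Longrightarrow> \<bar>g x - (\<Sum>k\<le>n. g (k/n) * Bernstein n k x)\<bar> < e"
      using Bernstein_Weierstrass[OF g e] by blast
    show "\<forall>\<^sub>F n in sequentially. \<forall>s\<in>{0..L}. dist (poly (P n) s) (f s) < e"
      unfolding eventually_sequentially
    proof (intro exI allI impI ballI)
      fix n s assume n: "N \<le> n" and s: "s \<in> {0..L}"
      then have "s / L \<in> {0..1}" using L by auto
      from N[OF n this] have "\<bar>g (s / L) - poly (P n) s\<bar> < e" by (simp add: polyP)
      moreover have "g (s / L) = f s" using L by (simp add: g_def)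
      ultimately show "dist (poly (P n) s) (f s) < e" by (simp add: dist_real_def abs_minus_commute)
    qed
  qed
  then show ?thesis by blast
qed

lemma fc_fun_cont: "0 \<le> r \<Longrightarrow> continuous_on {0..L} (fc_fun r)"
proof (cases "r = 0")
  case True
  then show ?thesis by (simp add: fc_fun_def[abs_def] continuous_on_const)
next
  case False
  assume "0 \<le> r"
  then have "fc_fun r = (\<lambda>s. s powr r)" using False by (simp add: fc_fun_def[abs_def])
  moreover have "continuous_on {0..L} (\<lambda>s. s powr r)"
    using False \<open>0 \<le> r\<close> by (intro continuous_on_powr') (auto intro!: continuous_intros)
  ultimately show ?thesis by simp
qed

lemma fc_fun_bound:
  assumes "0 \<le> r" "s \<in> {0..K}"
  shows "0 \<le> fc_fun r s" "fc_fun r s \<le> (if r = 0 then 1 else K powr r)"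
  using assms by (auto simp: fc_fun_def intro: powr_mono2)

lemma fc_fun_mult:
  assumes "0 \<le> r" "0 \<le> q" "0 \<le> s"
  shows "fc_fun r s * fc_fun q s = fc_fun (r + q) s"
  using assms by (auto simp: fc_fun_def powr_add)

lemma fc_fun_bounded: "0 \<le> r \<Longrightarrow> bounded (fc_fun r ` {0..L})"
  by (intro compact_imp_bounded compact_continuous_image fc_fun_cont) auto

lemma exists_approx:
  assumes "0 \<le> r"
  shows "\<exists>P. uniform_limit {0..L} (\<lambda>n. poly (P n)) (fc_fun r) sequentially"
proof -
  have L1: "0 < max L 0 + 1" by simp
  obtain P where "uniform_limit {0..max L 0 + 1} (\<lambda>n. poly (P n)) (fc_fun r) sequentially"
    using weierstrass_poly[OF L1 fc_fun_cont[OF assms]] by blast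
  then have "uniform_limit {0..L} (\<lambda>n. poly (P n)) (fc_fun r) sequentially"
    by (rule uniform_limit_on_subset) auto
  then show ?thesis by blast
qed

section \<open>The functional calculus\<close>

lemma poly_op_unif_diff:
  assumes A: "posop A"
    and P: "uniform_limit {0..onorm A} (\<lambda>n. poly (P n)) g sequentially"
    and Q: "uniform_limit {0..onorm A} (\<lambda>n. poly (Q n)) g sequentially"
  shows "(\<lambda>n. poly_op (P n) A x - poly_op (Q n) A x) \<longlonglongrightarrow> 0"
proof (rule LIMSEQ_I)
  fix e :: real assume e: "0 < e"
  define e' where "e' = e / (2 * (norm x + 1))"
  have nx: "0 < norm x + 1" using norm_ge_zero[of x] by linarith
  have e': "0 < e'" unfolding e'_def using e nx by simp
  have "\<forall>\<^sub>F n in sequentially. (\<forall>s\<in>{0..onorm A}. dist (poly (P n) s) (g s) < e') \<and>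
      (\<forall>s\<in>{0..onorm A}. dist (poly (Q n) s) (g s) < e')"
    using uniform_limitD[OF P e'] uniform_limitD[OF Q e'] by (rule eventually_conj)
  then obtain N where N: "\<And>n s. N \<le> n \<Longrightarrow> s \<in> {0..onorm A} \<Longrightarrow>
      dist (poly (P n) s) (g s) < e' \<and> dist (poly (Q n) s) (g s) < e'"
    unfolding eventually_sequentially by blast
  have "norm (poly_op (P n) A x - poly_op (Q n) A x - 0) < e" if "N \<le> n" for n
  proof -
    have "\<bar>poly (P n - Q n) s\<bar> \<le> 2 * e'" if "s \<in> {0..onorm A}" for s
      using N[OF \<open>N \<le> n\<close> that] by (auto simp: dist_real_def abs_less_iff abs_le_iff)
    then have "norm (poly_op (P n - Q n) A x) \<le> 2 * e' * norm x"
      by (rule poly_op_norm_bound[OF A])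
    also have "\<dots> < e"
    proof -
      have eq: "2 * e' * norm x = e * norm x / (norm x + 1)" using nx by (simp add: e'_def field_simps)
      have "e * norm x < e * (norm x + 1)" using e by simp
      then have "e * norm x / (norm x + 1) < e" using nx by (simp add: divide_less_eq)
      then show ?thesis using eq by simp
    qed
    finally show ?thesis by (simp add: poly_op_diff)
  qed
  then show "\<exists>N. \<forall>n\<ge>N. norm (poly_op (P n) A x - poly_op (Q n) A x - 0) < e" by blast
qed

lemma poly_op_unif_cauchy:
  assumes A: "posop A"
    and P: "uniform_limit {0..onorm A} (\<lambda>n. poly (P n)) g sequentially"
  shows "Cauchy (\<lambda>n. poly_op (P n) A x)"
proof (rule metric_CauchyI)
  fix e :: real assume e: "0 < e"
  define e' where "e' = e / (2 * (norm x + 1))"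
  have nx: "0 < norm x + 1" using norm_ge_zero[of x] by linarith
  have e': "0 < e'" unfolding e'_def using e nx by simp
  obtain N where N: "\<And>n s. N \<le> n \<Longrightarrow> s \<in> {0..onorm A} \<Longrightarrow> dist (poly (P n) s) (g s) < e'"
    using uniform_limitD[OF P e'] unfolding eventually_sequentially by blast
  have "dist (poly_op (P m) A x) (poly_op (P n) A x) < e" if "N \<le> m" "N \<le> n" for m n
  proof -
    have "\<bar>poly (P m - P n) s\<bar> \<le> 2 * e'" if "s \<in> {0..onorm A}" for s
      using N[OF \<open>N \<le> m\<close> that] N[OF \<open>N \<le> n\<close> that] by (auto simp: dist_real_def abs_less_iff abs_le_iff)
    then have "norm (poly_op (P m - P n) A x) \<le> 2 * e' * norm x"
      by (rule poly_op_norm_bound[OF A])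
    also have "\<dots> < e"
    proof -
      have eq: "2 * e' * norm x = e * norm x / (norm x + 1)" using nx by (simp add: e'_def field_simps)
      have "e * norm x < e * (norm x + 1)" using e by simp
      then have "e * norm x / (norm x + 1) < e" using nx by (simp add: divide_less_eq)
      then show ?thesis using eq by simp
    qed
    finally show ?thesis by (simp add: poly_op_diff dist_norm)
  qed
  then show "\<exists>N. \<forall>m\<ge>N. \<forall>n\<ge>N. dist (poly_op (P m) A x) (poly_op (P n) A x) < e" by blast
qed

lemma opow_lim:
  fixes A :: "'a::chilbert_space \<Rightarrow> 'a"
  assumes A: "posop A" and r: "0 \<le> r"
    and P: "uniform_limit {0..onorm A} (\<lambda>n. poly (P n)) (fc_fun r) sequentially"
  shows "(\<lambda>n. poly_op (P n) A x) \<longlonglongrightarrow> opow A r x"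
proof -
  define I where "I = {0..onorm A}"
  obtain P0 where P0: "uniform_limit I (\<lambda>n. poly (P0 n)) (fc_fun r) sequentially"
    using exists_approx[OF r, of "onorm A"] unfolding I_def by blast
  define B where "B x = lim (\<lambda>n. poly_op (P0 n) A x)" for x
  have B: "(\<lambda>n. poly_op (P0 n) A x) \<longlonglongrightarrow> B x" for x
    using poly_op_unif_cauchy[OF A P0[unfolded I_def]] unfolding B_def
    by (simp add: Cauchy_convergent_iff convergent_LIMSEQ_iff)
  have predB: "\<forall>P. uniform_limit I (\<lambda>n. poly (P n)) (fc_fun r) sequentially
      \<longrightarrow> (\<forall>x. (\<lambda>n. poly_op (P n) A x) \<longlonglongrightarrow> B x)"
  proof (intro allI impI)
    fix Q x assume Q: "uniform_limit I (\<lambda>n. poly (Q n)) (fc_fun r) sequentially"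
    have "(\<lambda>n. (poly_op (Q n) A x - poly_op (P0 n) A x) + poly_op (P0 n) A x) \<longlonglongrightarrow> 0 + B x"
      using poly_op_unif_diff[OF A Q[unfolded I_def] P0[unfolded I_def]] B by (rule tendsto_add)
    then show "(\<lambda>n. poly_op (Q n) A x) \<longlonglongrightarrow> B x" by simp
  qed
  have "opow A r = B"
    unfolding opow_def I_def[symmetric]
  proof (rule the_equality)
    show "\<forall>P. uniform_limit I (\<lambda>n. poly (P n)) (fc_fun r) sequentially \<longrightarrow> (\<forall>x. (\<lambda>n. poly_op (P n) A x) \<longlonglongrightarrow> B x)"
      by (rule predB)
  next
    fix B' assume "\<forall>P. uniform_limit I (\<lambda>n. poly (P n)) (fc_fun r) sequentially \<longrightarrow> (\<forall>x. (\<lambda>n. poly_op (P n) A x) \<longlonglongrightarrow> B' x)"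
    then have "(\<lambda>n. poly_op (P0 n) A x) \<longlonglongrightarrow> B' x" for x using P0 by blast
    then show "B' = B" using B by (intro ext) (rule LIMSEQ_unique)
  qed
  then show ?thesis using predB P unfolding I_def by blast
qed

lemma opow_lim':
  fixes A :: "'a::chilbert_space \<Rightarrow> 'a"
  assumes A: "posop A" and r: "0 \<le> r" and L: "onorm A \<le> L"
    and P: "uniform_limit {0..L} (\<lambda>n. poly (P n)) (fc_fun r) sequentially"
  shows "(\<lambda>n. poly_op (P n) A x) \<longlonglongrightarrow> opow A r x"
  using L by (intro opow_lim[OF A r] uniform_limit_on_subset[OF P]) auto

lemma opow_bound:
  fixes A :: "'a::chilbert_space \<Rightarrow> 'a"
  assumes A: "posop A" and r: "0 \<le> r"
    and b: "\<And>s. s \<in> {0..onorm A} \<Longrightarrow> \<bar>fc_fun r s - c\<bar> \<le> d"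
  shows "norm (opow A r x - c *\<^sub>R x) \<le> d * norm x"
proof -
  obtain P where P: "uniform_limit {0..onorm A} (\<lambda>n. poly (P n)) (fc_fun r) sequentially"
    using exists_approx[OF r] by blast
  have lim: "(\<lambda>n. norm (poly_op (P n) A x - c *\<^sub>R x)) \<longlonglongrightarrow> norm (opow A r x - c *\<^sub>R x)"
    by (intro tendsto_norm tendsto_diff opow_lim[OF A r P] tendsto_const)
  have le: "norm (opow A r x - c *\<^sub>R x) \<le> (d + e) * norm x" if e: "0 < e" for e
  proof (rule LIMSEQ_le_const2[OF lim])
    obtain N where N: "\<And>n s. N \<le> n \<Longrightarrow> s \<in> {0..onorm A} \<Longrightarrow> dist (poly (P n) s) (fc_fun r s) < e"
      using uniform_limitD[OF P e] unfolding eventually_sequentially by blast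
    have "norm (poly_op (P n) A x - c *\<^sub>R x) \<le> (d + e) * norm x" if "N \<le> n" for n
    proof -
      have "\<bar>poly (P n - [:c:]) s\<bar> \<le> d + e" if "s \<in> {0..onorm A}" for s
        using N[OF \<open>N \<le> n\<close> that] b[OF that] by (simp add: dist_real_def)
      then have "norm (poly_op (P n - [:c:]) A x) \<le> (d + e) * norm x"
        by (rule poly_op_norm_bound[OF A])
      then show ?thesis by (simp add: poly_op_diff)
    qed
    then show "\<exists>N. \<forall>n\<ge>N. norm (poly_op (P n) A x - c *\<^sub>R x) \<le> (d + e) * norm x" by blast
  qed
  show ?thesis
  proof (rule field_le_epsilon)
    fix e :: real assume e: "0 < e"
    have "norm (opow A r x - c *\<^sub>R x) \<le> (d + e / (norm x + 1)) * norm x"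
    proof (rule le)
      have "0 < norm x + 1" using norm_ge_zero[of x] by linarith
      then show "0 < e / (norm x + 1)" using e by simp
    qed
    also have "\<dots> \<le> d * norm x + e"
    proof -
      have "e / (norm x + 1) * norm x \<le> e"
        using e by (simp add: field_simps add_pos_nonneg)
      then show ?thesis by (simp add: algebra_simps)
    qed
    finally show "norm (opow A r x - c *\<^sub>R x) \<le> d * norm x + e" .
  qed
qed

lemma opow_norm:
  fixes A :: "'a::chilbert_space \<Rightarrow> 'a"
  assumes A: "posop A" and r: "0 \<le> r"
  shows "norm (opow A r x) \<le> (if r = 0 then 1 else onorm A powr r) * norm x"
proof -
  have "\<bar>fc_fun r s - 0\<bar> \<le> (if r = 0 then 1 else onorm A powr r)" if "s \<in> {0..onorm A}" for s
    using fc_fun_bound[OF r that] by simp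
  from opow_bound[OF A r this] show ?thesis by simp
qed

lemma opow_add:
  fixes A :: "'a::chilbert_space \<Rightarrow> 'a"
  assumes A: "posop A" and r: "0 \<le> r"
  shows "opow A r (x + y) = opow A r x + opow A r y"
proof -
  obtain P where P: "uniform_limit {0..onorm A} (\<lambda>n. poly (P n)) (fc_fun r) sequentially"
    using exists_approx[OF r] by blast
  have "(\<lambda>n. poly_op (P n) A x + poly_op (P n) A y) \<longlonglongrightarrow> opow A r x + opow A r y"
    by (intro tendsto_add opow_lim[OF A r P])
  moreover have "(\<lambda>n. poly_op (P n) A x + poly_op (P n) A y) \<longlonglongrightarrow> opow A r (x + y)"
    using opow_lim[OF A r P, of "x + y"] by (simp add: poly_op_lin(1)[OF posop_bcl[OF A]])
  ultimately show ?thesis using LIMSEQ_unique by blast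
qed

lemma opow_scaleC:
  fixes A :: "'a::chilbert_space \<Rightarrow> 'a"
  assumes A: "posop A" and r: "0 \<le> r"
  shows "opow A r (scaleC a x) = scaleC a (opow A r x)"
proof -
  obtain P where P: "uniform_limit {0..onorm A} (\<lambda>n. poly (P n)) (fc_fun r) sequentially"
    using exists_approx[OF r] by blast
  have "(\<lambda>n. scaleC a (poly_op (P n) A x)) \<longlonglongrightarrow> scaleC a (opow A r x)"
    by (rule bounded_linear.tendsto[OF bounded_linear_scaleC opow_lim[OF A r P]])
  moreover have "(\<lambda>n. scaleC a (poly_op (P n) A x)) \<longlonglongrightarrow> opow A r (scaleC a x)"
    using opow_lim[OF A r P, of "scaleC a x"] by (simp add: poly_op_lin(2)[OF posop_bcl[OF A]])
  ultimately show ?thesis using LIMSEQ_unique by blast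
qed

lemma opow_bcl:
  fixes A :: "'a::chilbert_space \<Rightarrow> 'a"
  assumes A: "posop A" and r: "0 \<le> r"
  shows "bounded_clinear (opow A r)"
  using opow_add[OF A r] opow_scaleC[OF A r] opow_norm[OF A r]
  by (intro bcl_intro[where K = "if r = 0 then 1 else onorm A powr r"]) (auto simp: mult.commute)

lemma opow_selfadj:
  fixes A :: "'a::chilbert_space \<Rightarrow> 'a"
  assumes A: "posop A" and r: "0 \<le> r"
  shows "cinner (opow A r x) y = cinner x (opow A r y)"
proof -
  obtain P where P: "uniform_limit {0..onorm A} (\<lambda>n. poly (P n)) (fc_fun r) sequentially"
    using exists_approx[OF r] by blast
  have "(\<lambda>n. cinner (poly_op (P n) A x) y) \<longlonglongrightarrow> cinner (opow A r x) y"
    by (intro tendsto_cinner opow_lim[OF A r P] tendsto_const)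
  moreover have "(\<lambda>n. cinner x (poly_op (P n) A y)) \<longlonglongrightarrow> cinner x (opow A r y)"
    by (intro tendsto_cinner opow_lim[OF A r P] tendsto_const)
  moreover have "cinner (poly_op (P n) A x) y = cinner x (poly_op (P n) A y)" for n
    by (rule poly_op_selfadj[OF posop_bcl[OF A] posop_sa[OF A]])
  ultimately show ?thesis using LIMSEQ_unique by fastforce
qed

lemma opow_zero:
  fixes A :: "'a::chilbert_space \<Rightarrow> 'a"
  assumes A: "posop A"
  shows "opow A 0 x = x"
proof -
  have "uniform_limit {0..onorm A} (\<lambda>n. poly 1) (fc_fun 0) sequentially"
    by (rule uniform_limitI) (simp add: fc_fun_def)
  from opow_lim[OF A order_refl this, of x] show ?thesis by (simp add: LIMSEQ_const_iff)
qed

lemma opow_one: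
  fixes A :: "'a::chilbert_space \<Rightarrow> 'a"
  assumes A: "posop A"
  shows "opow A 1 x = A x"
proof -
  have "uniform_limit {0..onorm A} (\<lambda>n. poly [:0, 1:]) (fc_fun 1) sequentially"
    by (rule uniform_limitI) (simp add: fc_fun_def)
  from opow_lim[OF A zero_le_one this, of x] show ?thesis by (simp add: LIMSEQ_const_iff poly_op_X)
qed

lemma opow_mult:
  fixes A :: "'a::chilbert_space \<Rightarrow> 'a"
  assumes A: "posop A" and r: "0 \<le> r" and q: "0 \<le> q"
  shows "opow A r (opow A q x) = opow A (r + q) x"
proof -
  define I where "I = {0..onorm A}"
  obtain P where P: "uniform_limit I (\<lambda>n. poly (P n)) (fc_fun r) sequentially"
    using exists_approx[OF r, of "onorm A"] unfolding I_def by blast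
  obtain Q where Q: "uniform_limit I (\<lambda>n. poly (Q n)) (fc_fun q) sequentially"
    using exists_approx[OF q, of "onorm A"] unfolding I_def by blast
  have PQ: "uniform_limit I (\<lambda>n. poly (P n * Q n)) (fc_fun (r + q)) sequentially"
  proof -
    have "uniform_limit I (\<lambda>n s. poly (P n) s * poly (Q n) s) (\<lambda>s. fc_fun r s * fc_fun q s) sequentially"
      using P Q fc_fun_bounded[OF r] fc_fun_bounded[OF q] unfolding I_def by (intro uniform_lim_mult) auto
    moreover have "\<And>s. s \<in> I \<Longrightarrow> fc_fun r s * fc_fun q s = fc_fun (r + q) s"
      using fc_fun_mult[OF r q] unfolding I_def by auto
    ultimately show ?thesis
      by (intro uniform_limitI) (auto simp: poly_mult dest!: uniform_limitD elim!: eventually_mono)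
  qed
  define Br where "Br = (if r = 0 then 1 else onorm A powr r)"
  obtain N where N: "\<And>n s. N \<le> n \<Longrightarrow> s \<in> I \<Longrightarrow> dist (poly (P n) s) (fc_fun r s) < 1"
    using uniform_limitD[OF P zero_less_one] unfolding eventually_sequentially by blast
  have Pb: "norm (poly_op (P n) A z) \<le> (Br + 1) * norm z" if "N \<le> n" for n z
  proof (rule poly_op_norm_bound[OF A])
    fix s assume s: "s \<in> {0..onorm A}"
    then have "fc_fun r s \<le> Br" "0 \<le> fc_fun r s" using fc_fun_bound[OF r s] by (auto simp: Br_def)
    then show "\<bar>poly (P n) s\<bar> \<le> Br + 1" using N[OF that s[folded I_def]] by (auto simp: dist_real_def)
  qed
  have t1: "(\<lambda>n. poly_op (P n) A (poly_op (Q n) A x - opow A q x)) \<longlonglongrightarrow> 0"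
  proof -
    have l0: "(\<lambda>n. poly_op (Q n) A x - opow A q x) \<longlonglongrightarrow> 0"
      using tendsto_diff[OF opow_lim[OF A q Q[unfolded I_def], of x] tendsto_const[of "opow A q x"]] by simp
    have "(\<lambda>n. (Br + 1) * norm (poly_op (Q n) A x - opow A q x)) \<longlonglongrightarrow> 0"
      using tendsto_mult[OF tendsto_const[of "Br + 1"] tendsto_norm_zero[OF l0]] by simp
    then show ?thesis
      by (rule Lim_null_comparison[rotated]) (auto simp: eventually_sequentially intro!: exI[of _ N] Pb)
  qed
  have "(\<lambda>n. poly_op (P n) A (poly_op (Q n) A x - opow A q x) + poly_op (P n) A (opow A q x)) \<longlonglongrightarrow> 0 + opow A r (opow A q x)"
    using t1 opow_lim[OF A r P[unfolded I_def]] by (rule tendsto_add)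
  moreover have "poly_op (P n) A (poly_op (Q n) A x - opow A q x) + poly_op (P n) A (opow A q x) = poly_op (P n * Q n) A x" for n
    by (simp add: poly_op_mult[OF posop_bcl[OF A]] bcl_diff[OF poly_op_bcl[OF posop_bcl[OF A]]])
  ultimately have "(\<lambda>n. poly_op (P n * Q n) A x) \<longlonglongrightarrow> opow A r (opow A q x)" by simp
  moreover have "(\<lambda>n. poly_op (P n * Q n) A x) \<longlonglongrightarrow> opow A (r + q) x"
    using r q by (intro opow_lim[OF A _ PQ[unfolded I_def]]) simp
  ultimately show ?thesis using LIMSEQ_unique by blast
qed

lemma opow_posop:
  fixes A :: "'a::chilbert_space \<Rightarrow> 'a"
  assumes A: "posop A" and r: "0 \<le> r"
  shows "posop (opow A r)"
  unfolding posop_def selfadj_def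
proof (intro conjI allI)
  show "bounded_clinear (opow A r)" by (rule opow_bcl[OF A r])
  fix x y show "cinner (opow A r x) y = cinner x (opow A r y)" by (rule opow_selfadj[OF A r])
next
  fix x
  have "opow A r x = opow A (r/2) (opow A (r/2) x)" using r by (simp add: opow_mult[OF A])
  then have "cinner (opow A r x) x = cinner (opow A (r/2) x) (opow A (r/2) x)"
    using opow_selfadj[OF A, of "r/2"] r by simp
  then show "0 \<le> Re (cinner (opow A r x) x)" by (simp add: Re_cinner_self)
qed



lemma opow_transfer:
  fixes A A' U V :: "'a::chilbert_space \<Rightarrow> 'a"
  assumes A: "posop A" and A': "posop A'" and U: "bounded_clinear U"
    and eq: "\<And>x. A' x = U (A (V x))" and VU: "\<And>z. V (U (A z)) = A z" and r: "0 < r"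
  shows "opow A' r x = U (opow A r (V x))"
proof -
  have pf: "poly_op p A' x = poly p 0 *\<^sub>R x + U (poly_op p A (V x)) - poly p 0 *\<^sub>R U (V x)" for p x
  proof (induct p arbitrary: x rule: pCons_induct)
    case 0 then show ?case by (simp add: bcl_zero[OF U])
  next
    case (pCons a p)
    have "poly_op (pCons a p) A' x = a *\<^sub>R x + poly_op p A' (A' x)" by (simp add: poly_op_pCons)
    also have "\<dots> = a *\<^sub>R x + (poly p 0 *\<^sub>R A' x + U (poly_op p A (V (A' x))) - poly p 0 *\<^sub>R U (V (A' x)))"
      by (simp add: pCons)
    also have "V (A' x) = A (V x)" by (simp add: eq VU)
    also have "U (A (V x)) = A' x" by (simp add: eq)
    finally have "poly_op (pCons a p) A' x = a *\<^sub>R x + U (poly_op p A (A (V x)))" by simp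
    moreover have "U (poly_op (pCons a p) A (V x)) = a *\<^sub>R U (V x) + U (poly_op p A (A (V x)))"
      by (simp add: poly_op_pCons bcl_add[OF U] bcl_scaleR[OF U])
    ultimately show ?case by simp
  qed
  define L where "L = max (onorm A) (onorm A')"
  obtain P where P: "uniform_limit {0..L} (\<lambda>n. poly (P n)) (fc_fun r) sequentially"
    using exists_approx[of r L] r by auto
  have p0: "(\<lambda>n. poly (P n) 0) \<longlonglongrightarrow> 0"
  proof -
    have "0 \<le> L" unfolding L_def using onorm_pos_le[OF bcl_bounded_linear[OF posop_bcl[OF A]]] by simp
    then have "(\<lambda>n. poly (P n) 0) \<longlonglongrightarrow> fc_fun r 0" by (intro tendsto_uniform_limitI[OF P]) auto
    then show ?thesis using r by (simp add: fc_fun_def)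
  qed
  have LA: "onorm A \<le> L" "onorm A' \<le> L" by (simp_all add: L_def)
  have r0: "0 \<le> r" using r by simp
  have "(\<lambda>n. poly (P n) 0 *\<^sub>R x + U (poly_op (P n) A (V x)) - poly (P n) 0 *\<^sub>R U (V x)) \<longlonglongrightarrow>
      0 *\<^sub>R x + U (opow A r (V x)) - 0 *\<^sub>R U (V x)"
    by (intro tendsto_add tendsto_diff tendsto_scaleR p0 tendsto_const bcl_tendsto[OF U] opow_lim'[OF A r0 LA(1) P])
  moreover have "(\<lambda>n. poly_op (P n) A' x) \<longlonglongrightarrow> opow A' r x"
    by (rule opow_lim'[OF A' r0 LA(2) P])
  ultimately show ?thesis using LIMSEQ_unique by (fastforce simp: pf)
qed

lemma posop_adj_comp:
  fixes S :: "'a::chilbert_space \<Rightarrow> 'a"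
  assumes S: "bounded_clinear S"
  shows "posop (adj S \<circ> S)"
  unfolding posop_def selfadj_def
proof (intro conjI allI)
  show "bounded_clinear (adj S \<circ> S)" by (rule bcl_comp[OF adj_bcl[OF S] S])
  fix x y
  have "cinner ((adj S \<circ> S) x) y = cnj (cinner y (adj S (S x)))" by (simp add: cinner_commute[of _ y])
  also have "\<dots> = cnj (cinner (S y) (S x))" by (simp add: adj_prop[OF S])
  also have "\<dots> = cinner (S x) (S y)" by (simp add: cinner_commute[of "S x"])
  also have "\<dots> = cinner x ((adj S \<circ> S) y)" by (simp add: adj_prop[OF S])
  finally show "cinner ((adj S \<circ> S) x) y = cinner x ((adj S \<circ> S) y)" .
next
  fix x
  have "cinner ((adj S \<circ> S) x) x = cnj (cinner (S x) (S x))"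
    by (simp add: cinner_commute[of _ x] adj_prop[OF S])
  then show "0 \<le> Re (cinner ((adj S \<circ> S) x) x)" by (simp add: Re_cinner_self)
qed

lemma norm_diff_sq:
  "(norm (a - b))\<^sup>2 = (norm a)\<^sup>2 - 2 * Re (cinner a b) + (norm (b::'a::complex_inner))\<^sup>2"
proof -
  have e: "a - b = a + scaleC (-1) b" by (simp add: scaleC_minus_left scaleC_one)
  show ?thesis by (subst e, subst norm_add_scaleC_sq) simp
qed

lemma final_ineq:
  fixes al be Y c M I L :: real
  assumes al: "0 < al" and be: "0 \<le> be" "be \<le> Y" and c: "0 \<le> c" and M: "0 \<le> M"
    and bc: "be = 0 \<Longrightarrow> c = 0"
    and I: "I \<le> (if be = 0 then al\<^sup>2 else al\<^sup>2 - c\<^sup>2 / be\<^sup>2)"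
    and L: "L \<le> M / 2 * (al * be + c)"
  shows "L \<le> M / 2 * (2 * sqrt (al\<^sup>2 * Y\<^sup>2) - I / (2 * al) * Y)"
proof -
  have Y: "0 \<le> Y" using be by linarith
  have sq: "sqrt (al\<^sup>2 * Y\<^sup>2) = al * Y" using al Y by (simp add: real_sqrt_mult)
  have key: "al * be + c \<le> 2 * al * Y - I / (2 * al) * Y"
  proof (cases "be = 0")
    case True
    then have "c = 0" by (rule bc)
    have "I / (2 * al) * Y \<le> al\<^sup>2 / (2 * al) * Y"
      using I True al Y by (intro mult_right_mono divide_right_mono) auto
    also have "\<dots> = al * Y / 2" using al by (simp add: power2_eq_square field_simps)
    finally have h: "I / (2 * al) * Y \<le> al * Y / 2" .
    have "0 \<le> al * Y" using al Y by simp
    moreover have "2 * al * Y = 2 * (al * Y)" by simp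
    moreover have "al * be + c = 0" using True \<open>c = 0\<close> by simp
    ultimately show ?thesis using h by linarith
  next
    case False
    then have be0: "0 < be" using be by simp
    define G where "G = 3 * al / 2 + c\<^sup>2 / (2 * al * be\<^sup>2)"
    have G0: "0 \<le> G" unfolding G_def using al be0 by (intro add_nonneg_nonneg) auto
    have "I / (2 * al) * Y \<le> (al\<^sup>2 - c\<^sup>2 / be\<^sup>2) / (2 * al) * Y"
      using I False al Y by (intro mult_right_mono divide_right_mono) auto
    then have "2 * al * Y - (al\<^sup>2 - c\<^sup>2 / be\<^sup>2) / (2 * al) * Y \<le> 2 * al * Y - I / (2 * al) * Y" by linarith
    moreover have "2 * al * Y - (al\<^sup>2 - c\<^sup>2 / be\<^sup>2) / (2 * al) * Y = G * Y"
      unfolding G_def using al be0 by (simp add: field_simps power2_eq_square)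
    moreover have "G * be \<le> G * Y" using G0 be by (simp add: mult_left_mono)
    moreover have "al * be + c \<le> G * be"
    proof -
      have "G * be = 3 * al * be / 2 + c\<^sup>2 / (2 * al * be)"
        unfolding G_def using al be0 by (simp add: field_simps power2_eq_square)
      moreover have "(al * be - c)\<^sup>2 / (2 * al * be) \<ge> 0" using al be0 by simp
      moreover have "(al * be - c)\<^sup>2 / (2 * al * be) = al * be / 2 + c\<^sup>2 / (2 * al * be) - c"
        using al be0 by (simp add: field_simps power2_eq_square)
      ultimately show ?thesis by linarith
    qed
    ultimately show ?thesis by linarith
  qed
  have "L \<le> M / 2 * (al * be + c)" by (rule L)
  also have "\<dots> \<le> M / 2 * (2 * al * Y - I / (2 * al) * Y)" using key M by (intro mult_left_mono) auto
  finally show ?thesis by (simp add: sq mult.assoc)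
qed



theorem proposition2p8:
  fixes T U :: "'a::chilbert_space \<Rightarrow> 'a" and t :: real and x y :: 'a
  assumes "bounded_clinear T"
    and "polar_decomposition T U"
    and "t \<in> {0..1}"
    and "T x \<noteq> 0"
  shows "cmod (cinner (T x) y) \<le>
    sqrt (onorm T) / 2 *
      (2 * sqrt (Re (cinner (opow (absop T) t x) x) * Re (cinner (opow (absop (adj T)) (1 - t) y) y))
       - (Inf ((\<lambda>l::complex. (norm (opow (absop T) (t/2) x - scaleC l (opow (absop T) ((1 - t)/2) (adj U y))))\<^sup>2) ` UNIV)
          / (2 * norm (opow (absop T) (t/2) x)))
         * norm (opow (absop (adj T)) ((1 - t)/2) y))"
proof -
  note T = assms(1)
  have pd: "partial_isometry U \<and> (\<forall>z. T z = U (absop T z)) \<and> (\<forall>z. U z = 0 \<longleftrightarrow> T z = 0)"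
    using assms(2) unfolding polar_decomposition_def .
  have pi: "partial_isometry U" using pd by (rule conjunct1)
  have TU: "T z = U (absop T z)" for z using pd by blast
  have kerU: "U z = 0 \<longleftrightarrow> T z = 0" for z using pd by blast
  have pi': "bounded_clinear U \<and> (\<forall>x. (\<forall>z. U z = 0 \<longrightarrow> cinner z x = 0) \<longrightarrow> norm (U x) = norm x)"
    using pi unfolding partial_isometry_def .
  have Ub: "bounded_clinear U" using pi' by (rule conjunct1)
  have iso: "norm (U v) = norm v" if "\<And>z. U z = 0 \<Longrightarrow> cinner z v = 0" for v
  proof -
    have "\<forall>z. U z = 0 \<longrightarrow> cinner z v = 0" using that by blast
    then show ?thesis using pi' by blast
  qed
  have t0: "0 \<le> t" and t1: "t \<le> 1" using assms(3) by auto
  define A where "A = adj T \<circ> T"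
  have A: "posop A" unfolding A_def by (rule posop_adj_comp[OF T])
  define P where "P = absop T"
  have P_def': "P = opow A (1/2)" by (simp add: P_def absop_def A_def)
  have P: "posop P" unfolding P_def' by (rule opow_posop[OF A]) simp
  have PP: "P (P z) = A z" for z
    unfolding P_def' using opow_mult[OF A, of "1/2" "1/2" z] opow_one[OF A, of z] by simp
  have Psa: "cinner (P u) v = cinner u (P v)" for u v using posop_sa[OF P] by (simp add: selfadj_def)
  have Pb: "bounded_clinear P" using P by (rule posop_bcl)
  have TP: "T z = U (P z)" for z using TU by (simp add: P_def)
  have nTP: "norm (T z) = norm (P z)" for z
  proof -
    have "cinner (T z) (T z) = cinner z (A z)" by (simp add: A_def adj_prop[OF T])
    also have "\<dots> = cinner (P z) (P z)" by (simp add: PP[symmetric] Psa)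
    finally have "Re (cinner (T z) (T z)) = Re (cinner (P z) (P z))" by simp
    then have "(norm (T z))\<^sup>2 = (norm (P z))\<^sup>2" by (simp only: Re_cinner_self)
    then show ?thesis by (simp add: power2_eq_iff_nonneg)
  qed
  define Us where "Us = adj U"
  have Uadj: "cinner (U u) v = cinner u (Us v)" for u v by (simp add: Us_def adj_prop[OF Ub])
  have Uadj': "cinner (Us v) u = cinner v (U u)" for u v
    by (metis Uadj cinner_commute)
  have perpP: "cinner z (P w) = 0" if "U z = 0" for z w
  proof -
    have "T z = 0" using that kerU by simp
    then have "P z = 0" using nTP[of z] by simp
    then show ?thesis by (simp add: Psa[symmetric])
  qed
  have perpUs: "cinner z (Us v) = 0" if "U z = 0" for z v
    using that by (simp add: Uadj[symmetric])
  have F1: "Us (U (P w)) = P w" for w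
  proof -
    define v where "v = P w"
    define w' where "w' = Us (U v)"
    have nv: "norm (U v) = norm v" unfolding v_def by (rule iso) (rule perpP)
    have nw': "norm (U w') = norm w'" unfolding w'_def by (rule iso) (rule perpUs)
    have "(norm w')\<^sup>2 = Re (cinner w' w')" by (simp add: Re_cinner_self)
    also have "cinner w' w' = cinner (U v) (U w')" by (simp add: w'_def Uadj')
    also have "Re (cinner (U v) (U w')) \<le> norm (U v) * norm (U w')"
      using cauchy_schwarz complex_Re_le_cmod order_trans by blast
    finally have "(norm w')\<^sup>2 \<le> norm v * norm w'" using nv nw' by simp
    then have le: "norm w' \<le> norm v"
      by (cases "w' = 0") (simp_all add: power2_eq_square)
    have "Re (cinner w' v) = (norm v)\<^sup>2" by (simp add: w'_def Uadj' Re_cinner_self nv)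
    then have "(norm (w' - v))\<^sup>2 = (norm w')\<^sup>2 - (norm v)\<^sup>2" by (simp add: norm_diff_sq)
    also have "\<dots> \<le> 0" using le by (simp add: power_mono)
    finally have "w' - v = 0" by simp
    then show ?thesis by (simp add: w'_def v_def)
  qed
  have F2: "norm (Us v) \<le> norm v" for v
  proof -
    have nw: "norm (U (Us v)) = norm (Us v)" by (rule iso) (rule perpUs)
    have "(norm (Us v))\<^sup>2 = Re (cinner (Us v) (Us v))" by (simp add: Re_cinner_self)
    also have "cinner (Us v) (Us v) = cinner v (U (Us v))" by (simp add: Uadj')
    also have "Re (cinner v (U (Us v))) \<le> norm v * norm (U (Us v))"
      using cauchy_schwarz complex_Re_le_cmod order_trans by blast
    finally have "(norm (Us v))\<^sup>2 \<le> norm v * norm (Us v)" using nw by simp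
    then show ?thesis by (cases "Us v = 0") (simp_all add: power2_eq_square)
  qed
  have adjT: "adj T = (\<lambda>y. P (Us y))"
    by (rule adj_unique) (simp add: TP Uadj Psa)
  define A' where "A' = adj (adj T) \<circ> adj T"
  have A': "posop A'" unfolding A'_def by (rule posop_adj_comp[OF adj_bcl[OF T]])
  have A'eq: "A' v = U (A (Us v))" for v
  proof -
    have "A' v = T (adj T v)" by (simp add: A'_def adj_adj[OF T])
    also have "\<dots> = U (A (Us v))" by (simp add: adjT TP PP)
    finally show ?thesis .
  qed
  define Q where "Q = absop (adj T)"
  have Q_def': "Q = opow A' (1/2)" by (simp add: Q_def absop_def A'_def)
  have VU: "Us (U (A z)) = A z" for z using F1[of "P z"] by (simp add: PP)
  have Qeq: "Q v = U (P (Us v))" for v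
    unfolding Q_def' P_def' by (rule opow_transfer[OF A A' Ub A'eq VU]) simp
  have Q: "posop Q" unfolding Q_def' by (rule opow_posop[OF A']) simp
  have Qtr: "opow Q s v = U (opow P s (Us v))" if "0 < s" for s v
    by (rule opow_transfer[OF P Q Ub Qeq F1 that])
  define a where "a = opow P (t/2) x"
  define b where "b = opow P ((1-t)/2) (Us y)"
  define C where "C = opow P (1/2)"
  define M where "M = sqrt (onorm T)"
  define Y where "Y = norm (opow Q ((1-t)/2) y)"
  have M0: "0 \<le> M" unfolding M_def using bcl_onorm_nonneg[OF T] by simp
  have Px: "P x = opow P ((1-t)/2) (C a)"
  proof -
    have "C a = opow P (1/2 + t/2) x" unfolding C_def a_def using t0 by (simp add: opow_mult[OF P])
    then have "opow P ((1-t)/2) (C a) = opow P ((1-t)/2 + (1/2 + t/2)) x"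
      using t0 t1 by (simp add: opow_mult[OF P])
    also have "(1-t)/2 + (1/2 + t/2) = 1" by (simp add: field_simps)
    finally show ?thesis by (simp add: opow_one[OF P])
  qed
  have inner: "cinner (T x) y = cinner (C a) b"
  proof -
    have "cinner (T x) y = cinner (P x) (Us y)" by (simp add: TP Uadj)
    also have "\<dots> = cinner (C a) b" unfolding Px b_def using t1 by (simp add: opow_selfadj[OF P])
    finally show ?thesis .
  qed
  have onPT: "onorm P \<le> onorm T"
    by (rule onorm_bound[OF bcl_onorm_nonneg[OF T]]) (simp add: nTP[symmetric] bcl_onorm[OF T])
  have Cb: "norm (C a - (M/2) *\<^sub>R a) \<le> M/2 * norm a"
    unfolding C_def
  proof (rule opow_bound[OF P])
    fix s assume s: "s \<in> {0..onorm P}"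
    then have "fc_fun (1/2) s = sqrt s" by (simp add: fc_fun_def powr_half_sqrt)
    moreover have "sqrt s \<le> M" unfolding M_def using s onPT by auto
    moreover have "0 \<le> sqrt s" using s by simp
    ultimately show "\<bar>fc_fun (1/2) s - M/2\<bar> \<le> M/2" by (intro abs_leI) linarith+
  qed simp
  have CS: "cmod (cinner (T x) y) \<le> M/2 * (norm a * norm b + cmod (cinner a b))"
  proof -
    have "cinner (C a) b = cinner (C a - (M/2) *\<^sub>R a) b + of_real (M/2) * cinner a b"
      by (simp add: cinner_diff_left cinner_scaleR_left)
    then have "cmod (cinner (C a) b) \<le> cmod (cinner (C a - (M/2) *\<^sub>R a) b) + cmod (of_real (M/2) * cinner a b)"
      by (metis norm_triangle_ineq)
    also have "cmod (cinner (C a - (M/2) *\<^sub>R a) b) \<le> norm (C a - (M/2) *\<^sub>R a) * norm b" by (rule cauchy_schwarz)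
    also have "\<dots> \<le> M/2 * norm a * norm b" by (rule mult_right_mono[OF Cb]) simp
    also have "cmod (of_real (M/2) * cinner a b) = M/2 * cmod (cinner a b)" using M0 by (simp add: norm_mult)
    finally show ?thesis using inner by (simp add: algebra_simps)
  qed
  have e1: "Re (cinner (opow (absop T) t x) x) = (norm a)\<^sup>2"
  proof -
    have "opow P t x = opow P (t/2) a" unfolding a_def using t0 by (simp add: opow_mult[OF P])
    then have "cinner (opow P t x) x = cinner a a" unfolding a_def using t0 by (simp add: opow_selfadj[OF P])
    then show ?thesis by (simp add: P_def[symmetric] Re_cinner_self)
  qed
  have e2: "Re (cinner (opow (absop (adj T)) (1 - t) y) y) = Y\<^sup>2"
  proof -
    have "opow Q (1 - t) y = opow Q ((1-t)/2) (opow Q ((1-t)/2) y)" using t1 by (simp add: opow_mult[OF Q])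
    then have "cinner (opow Q (1 - t) y) y = cinner (opow Q ((1-t)/2) y) (opow Q ((1-t)/2) y)"
      using t1 by (simp add: opow_selfadj[OF Q])
    then show ?thesis by (simp add: Q_def[symmetric] Re_cinner_self Y_def)
  qed
  have e3: "opow (absop T) (t/2) x = a" by (simp add: a_def P_def)
  have e4: "norm (opow (absop (adj T)) ((1 - t)/2) y) = Y" by (simp add: Y_def Q_def)
  have anz: "a \<noteq> 0"
  proof
    assume "a = 0"
    have "P x = opow P (1 - t/2) a" unfolding a_def using t0 t1 by (simp add: opow_mult[OF P] opow_one[OF P])
    also have "\<dots> = 0" using \<open>a = 0\<close> bcl_zero[OF opow_bcl[OF P]] t1 by simp
    finally have "T x = 0" by (simp add: TP bcl_zero[OF Ub])
    then show False using assms(4) by simp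
  qed
  have nbY: "norm b \<le> Y"
  proof (cases "t = 1")
    case True
    then have "b = Us y" "Y = norm y" by (simp_all add: b_def Y_def opow_zero[OF P] opow_zero[OF Q])
    then show ?thesis using F2 by simp
  next
    case False
    then have s: "0 < 1 - t" using t1 by simp
    have "Y\<^sup>2 = Re (cinner (opow Q (1 - t) y) y)" using e2 by (simp add: Q_def)
    also have "opow Q (1 - t) y = U (opow P (1 - t) (Us y))" by (rule Qtr[OF s])
    also have "Re (cinner (U (opow P (1 - t) (Us y))) y) = Re (cinner (opow P (1 - t) (Us y)) (Us y))"
      by (simp add: Uadj)
    also have "opow P (1 - t) (Us y) = opow P ((1-t)/2) b" unfolding b_def using t1 by (simp add: opow_mult[OF P])
    also have "Re (cinner (opow P ((1-t)/2) b) (Us y)) = (norm b)\<^sup>2"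
    proof -
      have "cinner (opow P ((1-t)/2) b) (Us y) = cinner b (opow P ((1-t)/2) (Us y))"
        by (rule opow_selfadj[OF P]) (use t1 in simp)
      then have "cinner (opow P ((1-t)/2) b) (Us y) = cinner b b" unfolding b_def[symmetric] .
      then show ?thesis by (simp add: Re_cinner_self)
    qed
    finally have "Y\<^sup>2 = (norm b)\<^sup>2" .
    then show ?thesis by (simp add: Y_def power2_eq_iff_nonneg)
  qed
  define S where "S = (\<lambda>l::complex. (norm (a - scaleC l (opow (absop T) ((1 - t)/2) (adj U y))))\<^sup>2) ` UNIV"
  have bS: "opow (absop T) ((1 - t)/2) (adj U y) = b" by (simp add: b_def P_def Us_def)
  have InfS: "Inf S \<le> (if norm b = 0 then (norm a)\<^sup>2 else (norm a)\<^sup>2 - (cmod (cinner a b))\<^sup>2 / (norm b)\<^sup>2)"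
  proof -
    have bdd: "bdd_below S" unfolding S_def by (rule bdd_belowI[of _ 0]) auto
    show ?thesis
    proof (cases "norm b = 0")
      case True
      have "(norm (a - scaleC 0 b))\<^sup>2 \<in> S" unfolding S_def bS by blast
      then have "Inf S \<le> (norm (a - scaleC 0 b))\<^sup>2" using bdd by (rule cInf_lower)
      then show ?thesis using True by simp
    next
      case False
      define l where "l = cinner a b / of_real ((norm b)\<^sup>2)"
      have "(norm (a - scaleC l b))\<^sup>2 \<in> S" unfolding S_def bS by blast
      then have "Inf S \<le> (norm (a - scaleC l b))\<^sup>2" using bdd by (rule cInf_lower)
      also have "a - scaleC l b = a + scaleC (- cinner a b / of_real ((norm b)\<^sup>2)) b"
        by (simp add: l_def scaleC_minus_left)
      also have "(norm \<dots>)\<^sup>2 = (norm a)\<^sup>2 - (cmod (cinner a b))\<^sup>2 / (norm b)\<^sup>2"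
        using False by (intro norm_sq_proj) simp
      finally show ?thesis using False by simp
    qed
  qed
  have main: "cmod (cinner (T x) y) \<le> M / 2 * (2 * sqrt ((norm a)\<^sup>2 * Y\<^sup>2) - Inf S / (2 * norm a) * Y)"
  proof (rule final_ineq)
    show "0 < norm a" using anz by simp
    show "0 \<le> norm b" by simp
    show "norm b \<le> Y" by (rule nbY)
    show "0 \<le> cmod (cinner a b)" by simp
    show "0 \<le> M" by (rule M0)
    show "norm b = 0 \<Longrightarrow> cmod (cinner a b) = 0" by simp
    show "Inf S \<le> (if norm b = 0 then (norm a)\<^sup>2 else (norm a)\<^sup>2 - (cmod (cinner a b))\<^sup>2 / (norm b)\<^sup>2)"
      by (rule InfS)
    show "cmod (cinner (T x) y) \<le> M / 2 * (norm a * norm b + cmod (cinner a b))" by (rule CS)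
  qed
  show ?thesis using main by (simp only: e1 e2 e3 e4 M_def S_def)
qed


end
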